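(* Let $\mathfrak{h}$ be a compact Lie algebra with an $\operatorname{ad}(\mathfrak{h})$-invariant inner product, $(\pi,V)$ a faithful real representation of $\mathfrak{h}$ with $\bigcap_{x\in\mathfrak{h}}\ker\pi(x)=0$, and $\langle\cdot,\cdot\rangle_V$ a $\pi(\mathfrak{h})$-invariant inner product on $V$. Let $\mathfrak{n}=\mathfrak{h}\oplus V$ with $\mathfrak{h}$ central, $[V,V]\subset\mathfrak{h}$ and $\langle[v,w],x\rangle=\langle\pi(x)v,w\rangle_V$ for $x\in\mathfrak{h}$, $v,w\in V$, with the orthogonal sum inner product. Let $s\in\{0,1\}$ with $\dim\mathfrak{h}\equiv s\pmod 2$, and consider $\mathbb{R}^s\oplus\mathfrak{n}$ with $\mathbb{R}^s$ central and orthogonal to $\mathfrak{n}$. Then the following are equivalent: (i) $\mathbb{R}^s\oplus\mathfrak{n}$ admits an abelian complex structure which is orthogonal for the inner product; (ii) every irreducible subrepresentation of $V$ of real type occurs in $V$ with even multiplicity.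
   Context: A complex structure $J$ (linear, $J^2=-I$, $[x,y]+J([Jx,y]+[x,Jy])-[Jx,Jy]=0$) is abelian if $[Jx,Jy]=[x,y]$ for all $x,y$, and orthogonal if $\langle Jx,Jy\rangle=\langle x,y\rangle$. An irreducible real representation $W$ of $\mathfrak{h}$ is of real, complex or quaternionic type according as its commutant $\operatorname{End}_{\mathfrak{h}}(W)$ is $\mathbb{R}$, $\mathbb{C}$ or $\mathbb{H}$; the multiplicity of $W$ in $V$ is the number of copies of $W$ in a decomposition of $V$ into irreducibles. (These Lie algebras $\mathfrak{n}$ are exactly the Lie algebras of naturally reductive $2$-step nilmanifolds without Euclidean factor.) *)

theory Defs
  imports "HOL-Analysis.Analysis"
begin

text \<open>A real Lie algebra structure on a finite-dimensional inner product space 'h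
  whose bracket is ad-invariant for the inner product of 'h.  (A real Lie algebra
  admitting an ad-invariant inner product is exactly a compact Lie algebra.)\<close>

definition lie_algebra :: "('h::real_vector \<Rightarrow> 'h \<Rightarrow> 'h) \<Rightarrow> bool" where
  "lie_algebra br \<longleftrightarrow>
     (\<forall>x. linear (br x)) \<and> (\<forall>y. linear (\<lambda>x. br x y)) \<and>
     (\<forall>x. br x x = 0) \<and>
     (\<forall>x y z. br x (br y z) + br y (br z x) + br z (br x y) = 0)"

definition ad_invariant :: "('h::real_inner \<Rightarrow> 'h \<Rightarrow> 'h) \<Rightarrow> bool" where
  "ad_invariant br \<longleftrightarrow> (\<forall>x y z. inner (br x y) z + inner y (br x z) = 0)"

definition representation ::
  "('h::real_vector \<Rightarrow> 'h \<Rightarrow> 'h) \<Rightarrow> ('h \<Rightarrow> 'v::real_vector \<Rightarrow> 'v) \<Rightarrow> bool" where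
  "representation br \<pi> \<longleftrightarrow>
     (\<forall>x. linear (\<pi> x)) \<and> (\<forall>v. linear (\<lambda>x. \<pi> x v)) \<and>
     (\<forall>x y v. \<pi> (br x y) v = \<pi> x (\<pi> y v) - \<pi> y (\<pi> x v))"

definition faithful :: "('h::real_vector \<Rightarrow> 'v::real_vector \<Rightarrow> 'v) \<Rightarrow> bool" where
  "faithful \<pi> \<longleftrightarrow> (\<forall>x. (\<forall>v. \<pi> x v = 0) \<longrightarrow> x = 0)"

definition no_trivial_part :: "('h \<Rightarrow> 'v::real_vector \<Rightarrow> 'v) \<Rightarrow> bool" where
  "no_trivial_part \<pi> \<longleftrightarrow> (\<forall>v. (\<forall>x. \<pi> x v = 0) \<longrightarrow> v = 0)"

definition rep_invariant_inner :: "('h \<Rightarrow> 'v::real_inner \<Rightarrow> 'v) \<Rightarrow> bool" where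
  "rep_invariant_inner \<pi> \<longleftrightarrow> (\<forall>x v w. inner (\<pi> x v) w + inner v (\<pi> x w) = 0)"

definition invariant_subspace :: "('h \<Rightarrow> 'v::real_vector \<Rightarrow> 'v) \<Rightarrow> 'v set \<Rightarrow> bool" where
  "invariant_subspace \<pi> U \<longleftrightarrow> subspace U \<and> (\<forall>x. \<forall>u\<in>U. \<pi> x u \<in> U)"

definition irreducible_subrep :: "('h \<Rightarrow> 'v::real_vector \<Rightarrow> 'v) \<Rightarrow> 'v set \<Rightarrow> bool" where
  "irreducible_subrep \<pi> U \<longleftrightarrow> invariant_subspace \<pi> U \<and> U \<noteq> {0} \<and>
     (\<forall>U'. invariant_subspace \<pi> U' \<and> U' \<subseteq> U \<longrightarrow> U' = {0} \<or> U' = U)"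

text \<open>Equivariant linear maps U \<rightarrow> U' (given by a linear map of the ambient space).\<close>
definition intertwiner :: "('h \<Rightarrow> 'v::real_vector \<Rightarrow> 'v) \<Rightarrow> 'v set \<Rightarrow> 'v set \<Rightarrow> ('v \<Rightarrow> 'v) \<Rightarrow> bool" where
  "intertwiner \<pi> U U' f \<longleftrightarrow> linear f \<and> f ` U \<subseteq> U' \<and> (\<forall>x. \<forall>u\<in>U. f (\<pi> x u) = \<pi> x (f u))"

definition rep_isomorphic :: "('h \<Rightarrow> 'v::real_vector \<Rightarrow> 'v) \<Rightarrow> 'v set \<Rightarrow> 'v set \<Rightarrow> bool" where
  "rep_isomorphic \<pi> U U' \<longleftrightarrow> (\<exists>f. intertwiner \<pi> U U' f \<and> bij_betw f U U')"

definition real_type :: "('h \<Rightarrow> 'v::real_vector \<Rightarrow> 'v) \<Rightarrow> 'v set \<Rightarrow> bool" where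
  "real_type \<pi> U \<longleftrightarrow> (\<forall>f. intertwiner \<pi> U U f \<longrightarrow> (\<exists>c::real. \<forall>u\<in>U. f u = c *\<^sub>R u))"

text \<open>A decomposition of the whole space V into irreducible subrepresentations
  (an internal direct sum: the summands span V and their dimensions add up to dim V).\<close>
definition irreducible_decomposition ::
  "('h \<Rightarrow> 'v::euclidean_space \<Rightarrow> 'v) \<Rightarrow> 'v set list \<Rightarrow> bool" where
  "irreducible_decomposition \<pi> Us \<longleftrightarrow>
     (\<forall>U\<in>set Us. irreducible_subrep \<pi> U) \<and>
     span (\<Union>(set Us)) = UNIV \<and>
     (\<Sum>i<length Us. dim (Us ! i)) = DIM('v)"

definition multiplicity_in :: "('h \<Rightarrow> 'v::real_vector \<Rightarrow> 'v) \<Rightarrow> 'v set list \<Rightarrow> 'v set \<Rightarrow> nat" where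
  "multiplicity_in \<pi> Us W = card {i. i < length Us \<and> rep_isomorphic \<pi> (Us ! i) W}"

definition vbracket :: "('h::real_inner \<Rightarrow> 'v::real_inner \<Rightarrow> 'v) \<Rightarrow> 'v \<Rightarrow> 'v \<Rightarrow> 'h" where
  "vbracket \<pi> v w = (THE z. \<forall>x. inner z x = inner (\<pi> x v) w)"

text \<open>Elements of R^s + h + V are modelled in real \<times> 'h \<times> 'v (product inner product,
  i.e. the orthogonal sum); the real factor is R^1 when s = 1 and is forced to 0 when s = 0.
  The factors R^s and h are central.\<close>
definition nbracket :: "('h::real_inner \<Rightarrow> 'v::real_inner \<Rightarrow> 'v) \<Rightarrow>
    real \<times> 'h \<times> 'v \<Rightarrow> real \<times> 'h \<times> 'v \<Rightarrow> real \<times> 'h \<times> 'v" where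
  "nbracket \<pi> p q = (0, vbracket \<pi> (snd (snd p)) (snd (snd q)), 0)"

definition ncarrier :: "nat \<Rightarrow> (real \<times> 'h::real_vector \<times> 'v::real_vector) set" where
  "ncarrier s = {p. s = 0 \<longrightarrow> fst p = 0}"

definition complex_structure_on ::
  "('a::real_vector) set \<Rightarrow> ('a \<Rightarrow> 'a \<Rightarrow> 'a) \<Rightarrow> ('a \<Rightarrow> 'a) \<Rightarrow> bool" where
  "complex_structure_on N br J \<longleftrightarrow>
     linear J \<and> J ` N \<subseteq> N \<and> (\<forall>u\<in>N. J (J u) = - u) \<and>
     (\<forall>u\<in>N. \<forall>w\<in>N. br u w + J (br (J u) w + br u (J w)) - br (J u) (J w) = 0)"

definition abelian_cs :: "('a::real_vector) set \<Rightarrow> ('a \<Rightarrow> 'a \<Rightarrow> 'a) \<Rightarrow> ('a \<Rightarrow> 'a) \<Rightarrow> bool" where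
  "abelian_cs N br J \<longleftrightarrow> (\<forall>u\<in>N. \<forall>w\<in>N. br (J u) (J w) = br u w)"

definition orthogonal_cs :: "('a::real_inner) set \<Rightarrow> ('a \<Rightarrow> 'a) \<Rightarrow> bool" where
  "orthogonal_cs N J \<longleftrightarrow> (\<forall>u\<in>N. \<forall>w\<in>N. inner (J u) (J w) = inner u w)"

end

theory Submission
  imports Defs
begin

definition orth :: "'a::real_inner set \<Rightarrow> 'a set" where
  "orth U = {x. \<forall>u\<in>U. inner x u = 0}"

lemma subspace_orth: "subspace (orth U)"
  unfolding subspace_def orth_def by (auto simp: inner_add_left)

lemma orth_self: "x \<in> U \<Longrightarrow> x \<in> orth U \<Longrightarrow> x = 0"
  unfolding orth_def by auto

lemma inner_eq_on_subspace:
  fixes a b :: "'a::real_inner"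
  assumes "subspace U" "a \<in> U" "b \<in> U" "\<And>w. w \<in> U \<Longrightarrow> inner a w = inner b w"
  shows "a = b"
proof -
  have "a - b \<in> U" using assms by (simp add: subspace_diff)
  then have "inner a (a - b) = inner b (a - b)" using assms(4) by blast
  then have "inner (a - b) (a - b) = 0" by (simp add: inner_diff_left)
  then show ?thesis by simp
qed

lemma onb_exists:
  fixes U :: "'a::euclidean_space set"
  assumes "subspace U"
  shows "\<exists>B. finite B \<and> B \<subseteq> U \<and> linear (\<lambda>x. \<Sum>b\<in>B. inner x b *\<^sub>R b) \<and>
    (\<forall>x. (\<Sum>b\<in>B. inner x b *\<^sub>R b) \<in> U) \<and> (\<forall>u\<in>U. (\<Sum>b\<in>B. inner u b *\<^sub>R b) = u) \<and>
    (\<forall>x. x - (\<Sum>b\<in>B. inner x b *\<^sub>R b) \<in> orth U)"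
proof -
  obtain B where B: "B \<subseteq> U" "pairwise orthogonal B" "\<And>x. x \<in> B \<Longrightarrow> norm x = 1"
    "independent B" "card B = dim U" "span B = U"
    using orthonormal_basis_subspace[OF assms] by metis
  have fin: "finite B" using B(4) by (simp add: finiteI_independent)
  define P where "P x = (\<Sum>b\<in>B. inner x b *\<^sub>R b)" for x
  have lin: "linear P"
    by (rule linearI) (auto simp: P_def inner_add_left scaleR_add_left sum.distrib scaleR_sum_right)
  have PU: "P x \<in> U" for x
    unfolding P_def using B(1) assms by (intro subspace_sum subspace_mul) auto
  have orthB: "inner (x - P x) b' = 0" if "b' \<in> B" for x b'
  proof -
    have "inner (P x) b' = (\<Sum>b\<in>B. inner x b * inner b b')"
      by (simp add: P_def inner_sum_left)
    also have "\<dots> = (\<Sum>b\<in>B. if b = b' then inner x b' else 0)"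
    proof (rule sum.cong)
      fix b assume "b \<in> B"
      show "inner x b * inner b b' = (if b = b' then inner x b' else 0)"
      proof (cases "b = b'")
        case True
        then have "inner b b' = 1" using B(3)[OF that] by (simp add: dot_square_norm)
        then show ?thesis using True by simp
      next
        case False
        then have "inner b b' = 0" using B(2) \<open>b \<in> B\<close> that
          by (auto simp: pairwise_def orthogonal_def)
        then show ?thesis using False by simp
      qed
    qed simp
    also have "\<dots> = inner x b'" using that fin by simp
    finally show ?thesis by (simp add: inner_diff_left)
  qed
  have orthU: "x - P x \<in> orth U" for x
  proof -
    have "orthogonal (x - P x) a" if "a \<in> span B" for a
      using orthogonal_to_span[OF that] orthB by (auto simp: orthogonal_def)
    then show ?thesis using B(6) by (auto simp: orth_def orthogonal_def)
  qed
  have "P u = u" if "u \<in> U" for u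
  proof -
    have "u - P u \<in> U" using that PU assms by (simp add: subspace_diff)
    then show ?thesis using orthU[of u] orth_self by fastforce
  qed
  then show ?thesis using lin PU orthU fin B(1) unfolding P_def by blast
qed

lemma proj_exists:
  fixes U :: "'a::euclidean_space set"
  assumes "subspace U"
  shows "\<exists>P. linear P \<and> (\<forall>x. P x \<in> U) \<and> (\<forall>u\<in>U. P u = u) \<and> (\<forall>x. x - P x \<in> orth U)"
  using onb_exists[OF assms] by blast

lemma form_op:
  fixes U :: "'a::euclidean_space set"
  assumes "subspace U" and l1: "\<And>w. linear (\<lambda>u. \<beta> u w)" and l2: "\<And>u. linear (\<beta> u)"
  shows "\<exists>T. linear T \<and> (\<forall>u. T u \<in> U) \<and> (\<forall>u. \<forall>w\<in>U. inner (T u) w = \<beta> u w)"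
proof -
  obtain B where B: "finite B" "B \<subseteq> U" "\<forall>u\<in>U. (\<Sum>b\<in>B. inner u b *\<^sub>R b) = u"
    using onb_exists[OF assms(1)] by blast
  define T where "T u = (\<Sum>b\<in>B. \<beta> u b *\<^sub>R b)" for u
  have "linear T"
    by (rule linearI) (auto simp: T_def linear_add[OF l1] linear_scale[OF l1] scaleR_add_left sum.distrib scaleR_sum_right)
  moreover have "T u \<in> U" for u
    unfolding T_def using B(2) assms(1) by (intro subspace_sum subspace_mul) auto
  moreover have "inner (T u) w = \<beta> u w" if "w \<in> U" for u w
  proof -
    have "\<beta> u w = \<beta> u (\<Sum>b\<in>B. inner w b *\<^sub>R b)" using B(3) that by simp
    also have "\<dots> = (\<Sum>b\<in>B. inner w b * \<beta> u b)"
      by (simp add: linear_sum[OF l2] linear_scale[OF l2])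
    also have "\<dots> = inner (T u) w"
      by (simp add: T_def inner_sum_left inner_sum_right inner_commute[of _ w] mult.commute)
    finally show ?thesis by simp
  qed
  ultimately show ?thesis by blast
qed

lemma psd_zero:
  fixes a b :: real
  assumes "b \<ge> 0" "\<And>t. 2 * t * a + t\<^sup>2 * b \<ge> 0"
  shows "a = 0"
proof (rule ccontr)
  assume "a \<noteq> 0"
  define t where "t = - a / (b + 1)"
  have b1: "b + 1 > 0" using assms by simp
  have e: "(b + 1)\<^sup>2 * (2 * t * a + t\<^sup>2 * b) = a\<^sup>2 * (- b - 2)"
  proof -
    have tb: "t * (b + 1) = - a" unfolding t_def using b1 by simp
    have "(b + 1)\<^sup>2 * (2 * t * a + t\<^sup>2 * b) = 2 * a * (t * (b + 1)) * (b + 1) + b * (t * (b + 1))\<^sup>2"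
      by (simp add: power2_eq_square algebra_simps)
    then show ?thesis unfolding tb by (simp add: power2_eq_square algebra_simps)
  qed
  have "a\<^sup>2 * (- b - 2) < 0" using \<open>a \<noteq> 0\<close> assms(1) by (intro mult_pos_neg) auto
  moreover have "(b + 1)\<^sup>2 * (2 * t * a + t\<^sup>2 * b) \<ge> 0" using assms(2)[of t] b1 by simp
  ultimately show False using e by linarith
qed

lemma sym_eigen:
  fixes T :: "'a::euclidean_space \<Rightarrow> 'a"
  assumes U: "subspace U" "U \<noteq> {0}" and T: "linear T" "\<forall>u\<in>U. T u \<in> U"
    and sym: "\<forall>u\<in>U. \<forall>w\<in>U. inner (T u) w = inner u (T w)"
  shows "\<exists>v\<in>U. v \<noteq> 0 \<and> (\<exists>c. T v = c *\<^sub>R v)"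
proof -
  define S where "S = U \<inter> sphere 0 1"
  have "compact S" unfolding S_def using closed_subspace[OF U(1)] by (intro closed_Int_compact) auto
  obtain u0 where u0: "u0 \<in> U" "u0 \<noteq> 0" using U(2) U(1) subspace_0 by blast
  have "u0 /\<^sub>R norm u0 \<in> S" using u0 U(1) by (auto simp: S_def subspace_mul)
  then have "S \<noteq> {}" by blast
  have bl: "bounded_linear T" using T(1) by (simp add: linear_conv_bounded_linear)
  have "continuous_on S (\<lambda>u. inner (T u) u)"
    using linear_continuous_on[OF bl] by (intro continuous_intros) auto
  then obtain v where v: "v \<in> S" "\<forall>y\<in>S. inner (T y) y \<le> inner (T v) v"
    using continuous_attains_sup[OF \<open>compact S\<close> \<open>S \<noteq> {}\<close>] by blast
  define c where "c = inner (T v) v"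
  have vU: "v \<in> U" and nv: "norm v = 1" using v(1) by (auto simp: S_def)
  have le: "inner (T u) u \<le> c * inner u u" if "u \<in> U" for u
  proof (cases "u = 0")
    case True then show ?thesis by (simp add: linear_0[OF T(1)])
  next
    case False
    have "u /\<^sub>R norm u \<in> S" using that False U(1) by (auto simp: S_def subspace_mul)
    then have "inner (T (u /\<^sub>R norm u)) (u /\<^sub>R norm u) \<le> c" using v(2) c_def by blast
    then have "inner (T u) u / (norm u)\<^sup>2 \<le> c"
      by (simp add: linear_scale[OF T(1)] power2_eq_square field_simps)
    then show ?thesis using False by (simp add: divide_le_eq dot_square_norm mult.commute)
  qed
  define A where "A u = c *\<^sub>R u - T u" for u
  have AU: "A u \<in> U" if "u \<in> U" for u using that T(2) U(1) by (simp add: A_def subspace_diff subspace_mul)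
  have Apos: "inner (A u) u \<ge> 0" if "u \<in> U" for u
    using le[OF that] by (simp add: A_def inner_diff_left)
  have Asym: "inner (A u) w = inner u (A w)" if "u \<in> U" "w \<in> U" for u w
    using sym that by (simp add: A_def inner_diff_left inner_diff_right inner_commute)
  have Av0: "inner (A v) v = 0"
    using nv by (simp add: A_def inner_diff_left c_def dot_square_norm)
  have Alin: "linear A" 
    by (rule linearI) (auto simp: A_def linear_add[OF T(1)] linear_scale[OF T(1)] algebra_simps)
  have "inner (A v) w = 0" if "w \<in> U" for w
  proof (rule psd_zero)
    show "inner (A w) w \<ge> 0" using Apos that by blast
    fix t :: real
    have vt: "v + t *\<^sub>R w \<in> U" using vU that U(1) by (simp add: subspace_add subspace_mul)
    have "inner (A (v + t *\<^sub>R w)) (v + t *\<^sub>R w) =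
          inner (A v) v + t * inner (A v) w + t * inner (A w) v + t\<^sup>2 * inner (A w) w"
      by (simp add: linear_add[OF Alin] linear_scale[OF Alin] inner_add_left inner_add_right
            power2_eq_square algebra_simps)
    also have "inner (A w) v = inner (A v) w" using Asym[OF that vU] by (simp add: inner_commute)
    finally show "2 * t * inner (A v) w + t\<^sup>2 * inner (A w) w \<ge> 0"
      using Apos[OF vt] Av0 by simp
  qed
  then have "A v \<in> orth U" by (simp add: orth_def)
  then have "A v = 0" using AU[OF vU] orth_self by blast
  then have "T v = c *\<^sub>R v" by (simp add: A_def)
  moreover have "v \<noteq> 0" using nv by auto
  ultimately show ?thesis using vU by blast
qed

lemma irr_D:
  assumes "irreducible_subrep \<pi> U"
  shows "subspace U" "U \<noteq> {0}" "\<And>x u. u \<in> U \<Longrightarrow> \<pi> x u \<in> U"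
    "\<And>U'. invariant_subspace \<pi> U' \<Longrightarrow> U' \<subseteq> U \<Longrightarrow> U' = {0} \<or> U' = U"
  using assms unfolding irreducible_subrep_def invariant_subspace_def by auto

lemma sym_scalar:
  fixes \<pi> :: "'h \<Rightarrow> 'v::euclidean_space \<Rightarrow> 'v"
  assumes irr: "irreducible_subrep \<pi> U" and pl: "\<And>x. linear (\<pi> x)"
    and T: "linear T" "\<forall>u\<in>U. T u \<in> U" "\<forall>x. \<forall>u\<in>U. T (\<pi> x u) = \<pi> x (T u)"
    and sym: "\<forall>u\<in>U. \<forall>w\<in>U. inner (T u) w = inner u (T w)"
  shows "\<exists>c. \<forall>u\<in>U. T u = c *\<^sub>R u"
proof -
  obtain v c where v: "v \<in> U" "v \<noteq> 0" "T v = c *\<^sub>R v"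
    using sym_eigen[OF irr_D(1,2)[OF irr] T(1,2) sym] by blast
  define E where "E = {u\<in>U. T u = c *\<^sub>R u}"
  have "invariant_subspace \<pi> E"
    unfolding invariant_subspace_def
  proof
    show "subspace E" unfolding E_def subspace_def using irr_D(1)[OF irr]
      by (auto simp: subspace_def linear_add[OF T(1)] linear_scale[OF T(1)] linear_0[OF T(1)] scaleR_add_right)
    show "\<forall>x. \<forall>u\<in>E. \<pi> x u \<in> E"
      using T(3) irr_D(3)[OF irr] by (auto simp: E_def linear_scale[OF pl])
  qed
  moreover have "E \<subseteq> U" by (auto simp: E_def)
  moreover have "E \<noteq> {0}" using v by (auto simp: E_def)
  ultimately have "E = U" using irr_D(4)[OF irr] by blast
  then show ?thesis unfolding E_def by blast
qed

lemma schur: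
  fixes \<pi> :: "'h \<Rightarrow> 'v::euclidean_space \<Rightarrow> 'v"
  assumes W: "irreducible_subrep \<pi> W" and U: "irreducible_subrep \<pi> U" and pl: "\<And>x. linear (\<pi> x)"
    and g: "intertwiner \<pi> W U g"
  shows "(\<forall>w\<in>W. g w = 0) \<or> bij_betw g W U"
proof -
  have gl: "linear g" and gWU: "g ` W \<subseteq> U" and gc: "\<forall>x. \<forall>u\<in>W. g (\<pi> x u) = \<pi> x (g u)"
    using g by (auto simp: intertwiner_def)
  note Ws = irr_D(1)[OF W]
  define K where "K = {w\<in>W. g w = 0}"
  have "invariant_subspace \<pi> K"
    unfolding invariant_subspace_def
  proof
    show "subspace K" unfolding K_def using Ws
      by (auto simp: subspace_def linear_add[OF gl] linear_scale[OF gl] linear_0[OF gl])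
    show "\<forall>x. \<forall>u\<in>K. \<pi> x u \<in> K"
      using gc irr_D(3)[OF W] by (auto simp: K_def linear_0[OF pl])
  qed
  then have K: "K = {0} \<or> K = W" using irr_D(4)[OF W] by (auto simp: K_def)
  show ?thesis
  proof (cases "K = W")
    case True then show ?thesis by (auto simp: K_def)
  next
    case False
    then have K0: "K = {0}" using K by simp
    have inj: "inj_on g W"
    proof (rule inj_onI)
      fix a b assume ab: "a \<in> W" "b \<in> W" "g a = g b"
      then have "a - b \<in> K" using Ws by (auto simp: K_def linear_diff[OF gl] subspace_diff)
      then show "a = b" using K0 by simp
    qed
    have "invariant_subspace \<pi> (g ` W)"
      unfolding invariant_subspace_def
    proof
      show "subspace (g ` W)" using linear_subspace_image[OF gl Ws] .
      show "\<forall>x. \<forall>u\<in>g ` W. \<pi> x u \<in> g ` W"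
        using gc irr_D(3)[OF W] by (auto intro!: image_eqI[where x="\<pi> _ _"])
    qed
    then have "g ` W = {0} \<or> g ` W = U" using irr_D(4)[OF U] gWU by blast
    moreover have "g ` W \<noteq> {0}"
    proof
      assume "g ` W = {0}"
      then have "K = W" by (auto simp: K_def)
      then show False using False by simp
    qed
    ultimately have "g ` W = U" by simp
    then show ?thesis using inj by (simp add: bij_betw_def)
  qed
qed

lemma iso_inverse:
  fixes \<pi> :: "'h \<Rightarrow> 'v::euclidean_space \<Rightarrow> 'v"
  assumes U: "invariant_subspace \<pi> U" and f: "intertwiner \<pi> U W f" "bij_betw f U W"
  shows "\<exists>g. intertwiner \<pi> W U g \<and> bij_betw g W U \<and> (\<forall>u\<in>U. g (f u) = u) \<and> (\<forall>w\<in>W. f (g w) = w)"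
proof -
  have fl: "linear f" and fc: "\<forall>x. \<forall>u\<in>U. f (\<pi> x u) = \<pi> x (f u)"
    using f(1) by (auto simp: intertwiner_def)
  have sU: "span U = U" using U by (simp add: invariant_subspace_def)
  have Ui: "\<pi> x u \<in> U" if "u \<in> U" for x u using U that by (simp add: invariant_subspace_def)
  have "inj_on f (span U)" using f(2) unfolding sU by (simp add: bij_betw_def)
  then obtain g where g: "range g \<subseteq> span U" "linear g" "\<forall>x\<in>span U. g (f x) = x"
    using linear_inj_on_left_inverse[OF fl] by blast
  have gf: "\<forall>u\<in>U. g (f u) = u" using g(3) sU by simp
  have fW: "f ` U = W" using f(2) by (simp add: bij_betw_def)
  have fg: "\<forall>w\<in>W. f (g w) = w" using gf fW by auto
  have "intertwiner \<pi> W U g"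
    unfolding intertwiner_def
  proof (intro conjI allI ballI)
    show "linear g" by fact
    show "g ` W \<subseteq> U" using g(1) sU by auto
    fix x w assume "w \<in> W"
    then obtain u where u: "u \<in> U" "w = f u" using fW by auto
    have "\<pi> x (f u) = f (\<pi> x u)" using fc u by simp
    then show "g (\<pi> x w) = \<pi> x (g w)" using u gf Ui by simp
  qed
  moreover have "bij_betw g W U"
  proof (rule bij_betw_byWitness[where f'=f])
    show "\<forall>a\<in>W. f (g a) = a" by fact
    show "\<forall>a'\<in>U. g (f a') = a'" by fact
    show "g ` W \<subseteq> U" using g(1) sU by auto
    show "f ` U \<subseteq> W" using fW by simp
  qed
  ultimately show ?thesis using gf fg by blast
qed

lemma iso_sym:
  fixes \<pi> :: "'h \<Rightarrow> 'v::euclidean_space \<Rightarrow> 'v"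
  assumes "invariant_subspace \<pi> U" "rep_isomorphic \<pi> U W"
  shows "rep_isomorphic \<pi> W U"
  using assms iso_inverse unfolding rep_isomorphic_def by metis

lemma iso_trans:
  fixes \<pi> :: "'h \<Rightarrow> 'v::euclidean_space \<Rightarrow> 'v"
  assumes "rep_isomorphic \<pi> U W" "rep_isomorphic \<pi> W X"
  shows "rep_isomorphic \<pi> U X"
proof -
  obtain f g where f: "intertwiner \<pi> U W f" "bij_betw f U W" and g: "intertwiner \<pi> W X g" "bij_betw g W X"
    using assms unfolding rep_isomorphic_def by blast
  have "intertwiner \<pi> U X (g \<circ> f)"
    unfolding intertwiner_def
  proof (intro conjI allI ballI)
    show "linear (g \<circ> f)" using f(1) g(1) by (auto simp: intertwiner_def intro: linear_compose)
    show "(g \<circ> f) ` U \<subseteq> X" using f(1) g(1) by (fastforce simp: intertwiner_def image_subset_iff)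
    fix x u assume "u \<in> U"
    then have "f u \<in> W" using f(1) by (auto simp: intertwiner_def)
    then show "(g \<circ> f) (\<pi> x u) = \<pi> x ((g \<circ> f) u)" using f(1) g(1) \<open>u \<in> U\<close> by (simp add: intertwiner_def)
  qed
  moreover have "bij_betw (g \<circ> f) U X" using f(2) g(2) by (rule bij_betw_trans)
  ultimately show ?thesis unfolding rep_isomorphic_def by blast
qed

lemma iso_refl: "rep_isomorphic \<pi> U U"
  unfolding rep_isomorphic_def intertwiner_def
  by (rule exI[of _ id]) (auto simp: linear_id)

lemma real_type_transport:
  fixes \<pi> :: "'h \<Rightarrow> 'v::euclidean_space \<Rightarrow> 'v"
  assumes U: "invariant_subspace \<pi> U" and iso: "rep_isomorphic \<pi> U W" and W: "real_type \<pi> W"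
  shows "real_type \<pi> U"
  unfolding real_type_def
proof (intro allI impI)
  fix t assume t: "intertwiner \<pi> U U t"
  obtain f where f: "intertwiner \<pi> U W f" "bij_betw f U W" using iso unfolding rep_isomorphic_def by blast
  obtain g where g: "intertwiner \<pi> W U g" "bij_betw g W U" "\<forall>u\<in>U. g (f u) = u" "\<forall>w\<in>W. f (g w) = w"
    using iso_inverse[OF U f] by blast
  have "intertwiner \<pi> W W (f \<circ> t \<circ> g)"
    unfolding intertwiner_def
  proof (intro conjI allI ballI)
    show "linear (f \<circ> t \<circ> g)" using f(1) g(1) t by (auto simp: intertwiner_def intro!: linear_compose)
    show "(f \<circ> t \<circ> g) ` W \<subseteq> W" using f(1) g(1) t by (fastforce simp: intertwiner_def image_subset_iff)
    fix x w assume w: "w \<in> W"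
    then have "g w \<in> U" using g(1) by (auto simp: intertwiner_def)
    moreover then have "t (g w) \<in> U" using t by (auto simp: intertwiner_def)
    ultimately show "(f \<circ> t \<circ> g) (\<pi> x w) = \<pi> x ((f \<circ> t \<circ> g) w)" using f(1) g(1) t w by (simp add: intertwiner_def)
  qed
  then obtain c where c: "\<forall>w\<in>W. (f \<circ> t \<circ> g) w = c *\<^sub>R w" using W unfolding real_type_def by blast
  have fl: "linear f" "linear g" using f(1) g(1) by (auto simp: intertwiner_def)
  show "\<exists>c. \<forall>u\<in>U. t u = c *\<^sub>R u"
  proof (intro exI ballI)
    fix u assume u: "u \<in> U"
    have tu: "t u \<in> U" using t u by (auto simp: intertwiner_def)
    have fu: "f u \<in> W" using f(2) u by (auto simp: bij_betw_def)
    have "t u = g (f (t u))" using g(3) tu by simp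
    also have "f (t u) = f (t (g (f u)))" using g(3) u by simp
    also have "\<dots> = c *\<^sub>R f u" using c fu by simp
    also have "g (c *\<^sub>R f u) = c *\<^sub>R u" using linear_scale[OF fl(2)] g(3) u by simp
    finally show "t u = c *\<^sub>R u" .
  qed
qed

lemma orth_invariant:
  fixes \<pi> :: "'h \<Rightarrow> 'v::euclidean_space \<Rightarrow> 'v"
  assumes "rep_invariant_inner \<pi>" "\<And>x. linear (\<pi> x)" "invariant_subspace \<pi> U"
  shows "invariant_subspace \<pi> (orth U)"
  unfolding invariant_subspace_def
proof (intro conjI allI ballI)
  show "subspace (orth U)" by (rule subspace_orth)
  fix x y assume y: "y \<in> orth U"
  show "\<pi> x y \<in> orth U" unfolding orth_def
  proof (intro CollectI ballI)
    fix u assume u: "u \<in> U"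
    have "inner (\<pi> x y) u + inner y (\<pi> x u) = 0" using assms(1) unfolding rep_invariant_inner_def by blast
    then have "inner (\<pi> x y) u = - inner y (\<pi> x u)" by linarith
    also have "inner y (\<pi> x u) = 0" using y u assms(3) by (auto simp: orth_def invariant_subspace_def)
    finally show "inner (\<pi> x y) u = 0" by simp
  qed
qed

lemma invariant_Int:
  "invariant_subspace \<pi> A \<Longrightarrow> invariant_subspace \<pi> B \<Longrightarrow> invariant_subspace \<pi> (A \<inter> B)"
  unfolding invariant_subspace_def by (auto simp: subspace_inter)

definition dec :: "('h \<Rightarrow> 'v::euclidean_space \<Rightarrow> 'v) \<Rightarrow> 'v set \<Rightarrow> 'v set list \<Rightarrow> bool" where
  "dec \<pi> S Ds \<longleftrightarrow> (\<forall>U\<in>set Ds. irreducible_subrep \<pi> U) \<and> span (\<Union>(set Ds)) = S \<and>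
     sum_list (map dim Ds) = dim S"

lemma sum_list_map_nth: "sum_list (map f xs) = (\<Sum>i<length xs. f (xs ! i))"
proof (induction xs)
  case (Cons a xs)
  have "(\<Sum>i<length (a # xs). f ((a # xs) ! i)) = f a + (\<Sum>i<length xs. f (xs ! i))"
    by (simp only: length_Cons sum.lessThan_Suc_shift) simp
  then show ?case using Cons by simp
qed simp

lemma dec_UNIV: "irreducible_decomposition \<pi> Us \<longleftrightarrow> dec \<pi> UNIV Us"
  unfolding irreducible_decomposition_def dec_def sum_list_map_nth by simp

lemma mult_filter: "multiplicity_in \<pi> Ds W = length (filter (\<lambda>U. rep_isomorphic \<pi> U W) Ds)"
  unfolding multiplicity_in_def by (simp add: length_filter_conv_card)

lemma sum_orth:
  fixes U S :: "'a::euclidean_space set"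
  assumes "subspace U" "subspace S" "U \<subseteq> S"
  shows "{x + y | x y. x \<in> U \<and> y \<in> S \<inter> orth U} = S"
proof
  show "{x + y | x y. x \<in> U \<and> y \<in> S \<inter> orth U} \<subseteq> S"
    using assms by (auto intro: subspace_add)
  show "S \<subseteq> {x + y | x y. x \<in> U \<and> y \<in> S \<inter> orth U}"
  proof
    fix v assume v: "v \<in> S"
    obtain P where P: "linear P" "\<forall>x. P x \<in> U" "\<forall>u\<in>U. P u = u" "\<forall>x. x - P x \<in> orth U"
      using proj_exists[OF assms(1)] by blast
    have "v - P v \<in> S" using v P(2) assms by (auto intro: subspace_diff)
    then show "v \<in> {x + y | x y. x \<in> U \<and> y \<in> S \<inter> orth U}"
    proof -
      have "v = P v + (v - P v)" by simp
      then show ?thesis using P(2,4) \<open>v - P v \<in> S\<close> by blast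
    qed
  qed
qed

lemma orth_dim:
  fixes U S :: "'a::euclidean_space set"
  assumes "subspace U" "subspace S" "U \<subseteq> S"
  shows "dim U + dim (S \<inter> orth U) = dim S"
proof -
  have s2: "subspace (S \<inter> orth U)" using assms(2) subspace_orth by (rule subspace_inter)
  have "U \<inter> (S \<inter> orth U) = {0}" using assms orth_self subspace_0 subspace_orth by blast
  then show ?thesis using dim_sums_Int[OF assms(1) s2] sum_orth[OF assms] by simp
qed

lemma dec_cons:
  fixes \<pi> :: "'h \<Rightarrow> 'v::euclidean_space \<Rightarrow> 'v"
  assumes S: "subspace S" and U: "irreducible_subrep \<pi> U" "U \<subseteq> S"
    and D: "dec \<pi> (S \<inter> orth U) Ds"
  shows "dec \<pi> S (U # Ds)"
proof -
  have Us: "subspace U" using irr_D(1)[OF U(1)] .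
  have "span (\<Union>(set (U # Ds))) = span (U \<union> \<Union>(set Ds))" by simp
  also have "\<dots> = {x + y | x y. x \<in> span U \<and> y \<in> span (\<Union>(set Ds))}" by (rule span_Un)
  also have "\<dots> = {x + y | x y. x \<in> U \<and> y \<in> S \<inter> orth U}" using D Us by (simp add: dec_def span_eq_iff[THEN iffD2, OF Us])
  also have "\<dots> = S" using sum_orth[OF Us S U(2)] .
  finally have sp: "span (\<Union>(set (U # Ds))) = S" .
  have "sum_list (map dim (U # Ds)) = dim U + dim (S \<inter> orth U)" using D by (simp add: dec_def)
  also have "\<dots> = dim S" using orth_dim[OF Us S U(2)] .
  finally show ?thesis using sp U(1) D by (simp add: dec_def)
qed

lemma irr_exists:
  fixes \<pi> :: "'h \<Rightarrow> 'v::euclidean_space \<Rightarrow> 'v"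
  assumes "invariant_subspace \<pi> S" "S \<noteq> {0}"
  shows "\<exists>U. irreducible_subrep \<pi> U \<and> U \<subseteq> S"
proof -
  define M where "M = {U. invariant_subspace \<pi> U \<and> U \<subseteq> S \<and> U \<noteq> {0}}"
  have "S \<in> M" using assms by (simp add: M_def)
  then obtain U where U: "U \<in> M" "\<forall>U'. U' \<in> M \<longrightarrow> dim U \<le> dim U'"
    using ex_has_least_nat[of "\<lambda>U. U \<in> M" S dim] by blast
  have "irreducible_subrep \<pi> U"
    unfolding irreducible_subrep_def
  proof (intro conjI allI impI)
    show "invariant_subspace \<pi> U" "U \<noteq> {0}" using U(1) by (auto simp: M_def)
    fix U' assume U': "invariant_subspace \<pi> U' \<and> U' \<subseteq> U"
    show "U' = {0} \<or> U' = U"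
    proof (cases "U' = {0}")
      case False
      then have "U' \<in> M" using U' U(1) by (auto simp: M_def)
      then have "dim U \<le> dim U'" using U(2) by blast
      then have "U' = U" using U' U(1) subspace_dim_equal by (auto simp: M_def invariant_subspace_def)
      then show ?thesis by simp
    qed simp
  qed
  then show ?thesis using U(1) by (auto simp: M_def)
qed

lemma dec_exists:
  fixes \<pi> :: "'h \<Rightarrow> 'v::euclidean_space \<Rightarrow> 'v"
  assumes ri: "rep_invariant_inner \<pi>" and pl: "\<And>x. linear (\<pi> x)"
  shows "invariant_subspace \<pi> S \<Longrightarrow> \<exists>Ds. dec \<pi> S Ds"
proof (induction "dim S" arbitrary: S rule: less_induct)
  case less
  show ?case
  proof (cases "S = {0}")
    case True
    then show ?thesis by (intro exI[of _ "[]"]) (simp add: dec_def)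
  next
    case False
    obtain U where U: "irreducible_subrep \<pi> U" "U \<subseteq> S" using irr_exists[OF less.prems False] by blast
    have Ss: "subspace S" using less.prems by (simp add: invariant_subspace_def)
    have Us: "subspace U" using irr_D(1)[OF U(1)] .
    have inv: "invariant_subspace \<pi> (S \<inter> orth U)"
      using invariant_Int[OF less.prems orth_invariant[OF ri pl]] U(1) by (simp add: irreducible_subrep_def)
    have "dim U > 0" using irr_D(2)[OF U(1)] Us dim_eq_0 subspace_0 by fastforce
    then have "dim (S \<inter> orth U) < dim S" using orth_dim[OF Us Ss U(2)] by simp
    then obtain Ds where "dec \<pi> (S \<inter> orth U) Ds" using less.hyps inv by blast
    then show ?thesis using dec_cons[OF Ss U] by blast
  qed
qed

definition good :: "('h \<Rightarrow> 'v::real_inner \<Rightarrow> 'v) \<Rightarrow> 'v set \<Rightarrow> ('v \<Rightarrow> 'v) \<Rightarrow> bool" where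
  "good \<pi> S J \<longleftrightarrow> linear J \<and> (\<forall>v\<in>S. J v \<in> S) \<and> (\<forall>v\<in>S. J (J v) = - v) \<and>
     (\<forall>v\<in>S. \<forall>w\<in>S. inner (J v) (J w) = inner v w) \<and> (\<forall>v\<in>orth S. J v = 0) \<and>
     (\<forall>x. \<forall>v\<in>S. J (\<pi> x v) = \<pi> x (J v))"

lemma skew:
  assumes "rep_invariant_inner \<pi>" shows "inner (\<pi> x a) b = - inner a (\<pi> x b)"
proof -
  have "inner (\<pi> x a) b + inner a (\<pi> x b) = 0" using assms unfolding rep_invariant_inner_def by blast
  then show ?thesis by linarith
qed

lemma proj_orth_zero:
  assumes "subspace U" "\<forall>x. P x \<in> U" "\<forall>x. x - P x \<in> orth U" "v \<in> orth U"
  shows "P v = 0"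
proof -
  have "P v = v - (v - P v)" by simp
  also have "\<dots> \<in> orth U" using assms(3,4) subspace_orth by (blast intro: subspace_diff)
  finally show ?thesis using assms(2) orth_self by blast
qed

lemma good_zero:
  assumes pl: "\<And>x. linear (\<pi> x)" shows "good \<pi> {0} (\<lambda>_. 0)"
  unfolding good_def using linear_0[OF pl] by (auto simp: linear_zero)

lemma good_extend:
  fixes \<pi> :: "'h \<Rightarrow> 'v::euclidean_space \<Rightarrow> 'v"
  assumes A: "subspace A" and K: "linear K" "\<forall>v\<in>A. K v \<in> A" "\<forall>v\<in>A. K (K v) = - v"
    "\<forall>v\<in>A. \<forall>w\<in>A. inner (K v) (K w) = inner v w" "\<forall>x. \<forall>v\<in>A. K (\<pi> x v) = \<pi> x (K v)"
    and inv: "\<forall>x. \<forall>v\<in>A. \<pi> x v \<in> A"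
  shows "\<exists>J. good \<pi> A J"
proof -
  obtain P where P: "linear P" "\<forall>x. P x \<in> A" "\<forall>u\<in>A. P u = u" "\<forall>x. x - P x \<in> orth A"
    using proj_exists[OF A] by blast
  have "good \<pi> A (K \<circ> P)"
    unfolding good_def
  proof (intro conjI ballI allI)
    show "linear (K \<circ> P)" using K(1) P(1) by (rule linear_compose[rotated])
    fix v assume "v \<in> orth A"
    then show "(K \<circ> P) v = 0" using proj_orth_zero[OF A P(2) P(4)] linear_0[OF K(1)] by simp
  next
    fix v assume v: "v \<in> A"
    have Pv: "P v = v" using P(3) v by simp
    have PKv: "P (K v) = K v" using P(3) K(2) v by simp
    show "(K \<circ> P) v \<in> A" using Pv K(2) v by simp
    show "(K \<circ> P) ((K \<circ> P) v) = - v" using Pv PKv K(3) v by simp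
    fix x
    have "P (\<pi> x v) = \<pi> x v" using P(3) inv v by simp
    then show "(K \<circ> P) (\<pi> x v) = \<pi> x ((K \<circ> P) v)" using Pv K(5) v by simp
  next
    fix v w assume "v \<in> A" "w \<in> A"
    then show "inner ((K \<circ> P) v) ((K \<circ> P) w) = inner v w" using P(3) K(4) by simp
  qed
  then show ?thesis by blast
qed

lemma good_sum:
  fixes \<pi> :: "'h \<Rightarrow> 'v::euclidean_space \<Rightarrow> 'v"
  assumes pl: "\<And>x. linear (\<pi> x)"
    and A: "subspace A" "\<forall>x. \<forall>v\<in>A. \<pi> x v \<in> A" and B: "subspace B" "\<forall>x. \<forall>v\<in>B. \<pi> x v \<in> B"
    and AB: "\<forall>a\<in>A. \<forall>b\<in>B. inner a b = 0"
    and JA: "good \<pi> A JA" and JB: "good \<pi> B JB"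
  shows "good \<pi> {a + b | a b. a \<in> A \<and> b \<in> B} (\<lambda>v. JA v + JB v)"
proof -
  have BA: "\<forall>a\<in>A. \<forall>b\<in>B. inner b a = 0" using AB by (simp add: inner_commute)
  have aB: "a \<in> orth B" if "a \<in> A" for a using AB that by (simp add: orth_def)
  have bA: "b \<in> orth A" if "b \<in> B" for b using BA that by (simp add: orth_def)
  have lA: "linear JA" and JAA: "\<forall>v\<in>A. JA v \<in> A" and JA2: "\<forall>v\<in>A. JA (JA v) = - v"
    and JAi: "\<forall>v\<in>A. \<forall>w\<in>A. inner (JA v) (JA w) = inner v w" and JAo: "\<forall>v\<in>orth A. JA v = 0"
    and JAc: "\<forall>x. \<forall>v\<in>A. JA (\<pi> x v) = \<pi> x (JA v)"
    using JA unfolding good_def by blast+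
  have lB: "linear JB" and JBB: "\<forall>v\<in>B. JB v \<in> B" and JB2: "\<forall>v\<in>B. JB (JB v) = - v"
    and JBi: "\<forall>v\<in>B. \<forall>w\<in>B. inner (JB v) (JB w) = inner v w" and JBo: "\<forall>v\<in>orth B. JB v = 0"
    and JBc: "\<forall>x. \<forall>v\<in>B. JB (\<pi> x v) = \<pi> x (JB v)"
    using JB unfolding good_def by blast+
  have JAb: "JA b = 0" if "b \<in> B" for b using JAo bA[OF that] by blast
  have JBa: "JB a = 0" if "a \<in> A" for a using JBo aB[OF that] by blast
  have J: "JA (a + b) + JB (a + b) = JA a + JB b" if "a \<in> A" "b \<in> B" for a b
    using JAb[OF that(2)] JBa[OF that(1)] by (simp add: linear_add[OF lA] linear_add[OF lB])
  show ?thesis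
    unfolding good_def
  proof (intro conjI ballI allI)
    show "linear (\<lambda>v. JA v + JB v)" using lA lB by (rule linear_compose_add)
  next
    fix v assume "v \<in> {a + b | a b. a \<in> A \<and> b \<in> B}"
    then obtain a b where ab: "a \<in> A" "b \<in> B" "v = a + b" by blast
    have Ja: "JA a \<in> A" and Jb: "JB b \<in> B" using JAA JBB ab by auto
    show "JA v + JB v \<in> {a + b | a b. a \<in> A \<and> b \<in> B}"
      using J[OF ab(1,2)] Ja Jb ab(3) by blast
    have "JA (JA v + JB v) + JB (JA v + JB v) = JA (JA a) + JB (JB b)"
      using J[OF Ja Jb] J[OF ab(1,2)] ab(3) by simp
    also have "\<dots> = - v" using JA2 JB2 ab by simp
    finally show "JA (JA v + JB v) + JB (JA v + JB v) = - v" .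
    fix x
    have pa: "\<pi> x a \<in> A" and pb: "\<pi> x b \<in> B" using A(2) B(2) ab by auto
    have "\<pi> x v = \<pi> x a + \<pi> x b" using ab(3) linear_add[OF pl] by simp
    then have "JA (\<pi> x v) + JB (\<pi> x v) = JA (\<pi> x a) + JB (\<pi> x b)" using J[OF pa pb] by simp
    also have "\<dots> = \<pi> x (JA a) + \<pi> x (JB b)" using JAc JBc ab by simp
    also have "\<dots> = \<pi> x (JA v + JB v)" using J[OF ab(1,2)] ab(3) linear_add[OF pl] by simp
    finally show "JA (\<pi> x v) + JB (\<pi> x v) = \<pi> x (JA v + JB v)" .
  next
    fix v w assume "v \<in> {a + b | a b. a \<in> A \<and> b \<in> B}" "w \<in> {a + b | a b. a \<in> A \<and> b \<in> B}"
    then obtain a b a' b' where ab: "a \<in> A" "b \<in> B" "v = a + b" "a' \<in> A" "b' \<in> B" "w = a' + b'" by blast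
    have Ja: "JA a \<in> A" "JA a' \<in> A" and Jb: "JB b \<in> B" "JB b' \<in> B" using JAA JBB ab by auto
    have "inner (JA v + JB v) (JA w + JB w) = inner (JA a + JB b) (JA a' + JB b')"
      using J[OF ab(1,2)] J[OF ab(4,5)] ab(3,6) by simp
    also have "\<dots> = inner (JA a) (JA a') + inner (JB b) (JB b')"
      using AB BA Ja Jb by (simp add: inner_add_left inner_add_right)
    also have "\<dots> = inner a a' + inner b b'" using JAi JBi ab by simp
    also have "\<dots> = inner v w" using AB BA ab by (simp add: inner_add_left inner_add_right)
    finally show "inner (JA v + JB v) (JA w + JB w) = inner v w" .
  next
    fix v assume v: "v \<in> orth {a + b | a b. a \<in> A \<and> b \<in> B}"
    have "a \<in> {a + b | a b. a \<in> A \<and> b \<in> B}" if "a \<in> A" for a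
    proof -
      have "a = a + 0" by simp
      then show ?thesis using that subspace_0[OF B(1)] by blast
    qed
    then have "v \<in> orth A" using v unfolding orth_def by blast
    have "b \<in> {a + b | a b. a \<in> A \<and> b \<in> B}" if "b \<in> B" for b
    proof -
      have "b = 0 + b" by simp
      then show ?thesis using that subspace_0[OF A(1)] by blast
    qed
    then have "v \<in> orth B" using v unfolding orth_def by blast
    then show "JA v + JB v = 0" using \<open>v \<in> orth A\<close> JAo JBo by simp
  qed
qed

lemma good_from_skew:
  fixes \<pi> :: "'h \<Rightarrow> 'v::euclidean_space \<Rightarrow> 'v"
  assumes U: "subspace U" "\<forall>x. \<forall>v\<in>U. \<pi> x v \<in> U"
    and g: "linear g" "\<forall>v\<in>U. g v \<in> U" "\<forall>x. \<forall>v\<in>U. g (\<pi> x v) = \<pi> x (g v)"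
    "\<forall>v\<in>U. \<forall>w\<in>U. inner (g v) w + inner v (g w) = 0"
    "\<forall>v\<in>U. \<forall>w\<in>U. inner (g v) (g w) = inner v w"
  shows "\<exists>J. good \<pi> U J"
proof (rule good_extend[OF U(1) g(1,2) _ g(5,3) U(2)])
  show "\<forall>v\<in>U. g (g v) = - v"
  proof
    fix v assume v: "v \<in> U"
    have gv: "g v \<in> U" using g(2) v by blast
    show "g (g v) = - v"
    proof (rule inner_eq_on_subspace[OF U(1)])
      show "g (g v) \<in> U" using g(2) gv by blast
      show "- v \<in> U" using v U(1) by (simp add: subspace_neg)
      fix w assume w: "w \<in> U"
      have "inner (g (g v)) w + inner (g v) (g w) = 0" using g(4) gv w by blast
      then have "inner (g (g v)) w = - inner (g v) (g w)" by linarith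
      also have "\<dots> = inner (- v) w" using g(5) v w by simp
      finally show "inner (g (g v)) w = inner (- v) w" .
    qed
  qed
qed

lemma good_nonreal:
  fixes \<pi> :: "'h \<Rightarrow> 'v::euclidean_space \<Rightarrow> 'v"
  assumes ri: "rep_invariant_inner \<pi>" and pl: "\<And>x. linear (\<pi> x)"
    and irr: "irreducible_subrep \<pi> U" and nr: "\<not> real_type \<pi> U"
  shows "\<exists>J. good \<pi> U J"
proof -
  note Us = irr_D(1)[OF irr] and Ui = irr_D(3)[OF irr]
  obtain f where f: "intertwiner \<pi> U U f" and nf: "\<not> (\<exists>c::real. \<forall>u\<in>U. f u = c *\<^sub>R u)"
    using nr unfolding real_type_def by blast
  have fl: "linear f" and fU: "\<forall>u\<in>U. f u \<in> U" and fc: "\<forall>x. \<forall>u\<in>U. f (\<pi> x u) = \<pi> x (f u)"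
    using f by (auto simp: intertwiner_def)
  define \<beta> where "\<beta> u w = inner (f u) w + inner u (f w)" for u w
  have l1: "linear (\<lambda>u. \<beta> u w)" for w
    by (rule linearI) (simp_all add: \<beta>_def linear_add[OF fl] linear_scale[OF fl] inner_add_left algebra_simps)
  have l2: "linear (\<beta> u)" for u
    by (rule linearI) (simp_all add: \<beta>_def linear_add[OF fl] linear_scale[OF fl] inner_add_right algebra_simps)
  obtain T where T: "linear T" "\<forall>u. T u \<in> U" "\<forall>u. \<forall>w\<in>U. inner (T u) w = \<beta> u w"
    using form_op[OF Us l1 l2] by blast
  have Tc: "\<forall>x. \<forall>u\<in>U. T (\<pi> x u) = \<pi> x (T u)"
  proof (intro allI ballI)
    fix x u assume u: "u \<in> U"
    show "T (\<pi> x u) = \<pi> x (T u)"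
    proof (rule inner_eq_on_subspace[OF Us])
      show "T (\<pi> x u) \<in> U" "\<pi> x (T u) \<in> U" using T(2) Ui by auto
      fix w assume w: "w \<in> U"
      have pw: "\<pi> x w \<in> U" using Ui w by blast
      have "inner (T (\<pi> x u)) w = \<beta> (\<pi> x u) w" using T(3) w by blast
      also have "\<dots> = inner (\<pi> x (f u)) w + inner (\<pi> x u) (f w)" using fc u by (simp add: \<beta>_def)
      also have "\<dots> = - (inner (f u) (\<pi> x w) + inner u (\<pi> x (f w)))" using skew[OF ri] by simp
      also have "\<dots> = - \<beta> u (\<pi> x w)" using fc w by (simp add: \<beta>_def)
      also have "\<dots> = - inner (T u) (\<pi> x w)" using T(3) pw by simp
      also have "\<dots> = inner (\<pi> x (T u)) w" using skew[OF ri] by simp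
      finally show "inner (T (\<pi> x u)) w = inner (\<pi> x (T u)) w" .
    qed
  qed
  have Tsym: "\<forall>u\<in>U. \<forall>w\<in>U. inner (T u) w = inner u (T w)"
    using T(3) by (simp add: \<beta>_def inner_commute add.commute)
  obtain c where c: "\<forall>u\<in>U. T u = c *\<^sub>R u"
    using sym_scalar[OF irr pl T(1) _ Tc Tsym] T(2) by blast
  define g where "g u = f u - (c / 2) *\<^sub>R u" for u
  have gl: "linear g" unfolding g_def
    by (rule linearI) (simp_all add: linear_add[OF fl] linear_scale[OF fl] algebra_simps)
  have gU: "\<forall>v\<in>U. g v \<in> U" using fU Us by (simp add: g_def subspace_diff subspace_mul)
  have gc: "\<forall>x. \<forall>v\<in>U. g (\<pi> x v) = \<pi> x (g v)"
    using fc by (simp add: g_def linear_diff[OF pl] linear_scale[OF pl])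
  have gskew: "\<forall>v\<in>U. \<forall>w\<in>U. inner (g v) w + inner v (g w) = 0"
  proof (intro ballI)
    fix v w assume vw: "v \<in> U" "w \<in> U"
    have "inner (g v) w + inner v (g w) = \<beta> v w - c * inner v w"
      by (simp add: g_def \<beta>_def inner_diff_left inner_diff_right algebra_simps)
    also have "\<beta> v w = c * inner v w" using T(3) c vw by (metis inner_scaleR_left)
    finally show "inner (g v) w + inner v (g w) = 0" by simp
  qed
  obtain u0 where u0: "u0 \<in> U" "g u0 \<noteq> 0"
  proof (rule ccontr)
    assume "\<not> thesis"
    then have "\<forall>u\<in>U. g u = 0" using that by blast
    then have "\<forall>u\<in>U. f u = (c / 2) *\<^sub>R u" by (simp add: g_def)
    then show False using nf by blast
  qed
  define \<beta>' where "\<beta>' u w = inner (g u) (g w)" for u w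
  have l1': "linear (\<lambda>u. \<beta>' u w)" for w
    by (rule linearI) (simp_all add: \<beta>'_def linear_add[OF gl] linear_scale[OF gl] inner_add_left)
  have l2': "linear (\<beta>' u)" for u
    by (rule linearI) (simp_all add: \<beta>'_def linear_add[OF gl] linear_scale[OF gl] inner_add_right)
  obtain Q where Q: "linear Q" "\<forall>u. Q u \<in> U" "\<forall>u. \<forall>w\<in>U. inner (Q u) w = \<beta>' u w"
    using form_op[OF Us l1' l2'] by blast
  have Qc: "\<forall>x. \<forall>u\<in>U. Q (\<pi> x u) = \<pi> x (Q u)"
  proof (intro allI ballI)
    fix x u assume u: "u \<in> U"
    show "Q (\<pi> x u) = \<pi> x (Q u)"
    proof (rule inner_eq_on_subspace[OF Us])
      show "Q (\<pi> x u) \<in> U" "\<pi> x (Q u) \<in> U" using Q(2) Ui by auto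
      fix w assume w: "w \<in> U"
      have pw: "\<pi> x w \<in> U" using Ui w by blast
      have "inner (Q (\<pi> x u)) w = inner (\<pi> x (g u)) (g w)" using Q(3) w gc u by (simp add: \<beta>'_def)
      also have "\<dots> = - inner (g u) (\<pi> x (g w))" using skew[OF ri] by simp
      also have "\<dots> = - inner (Q u) (\<pi> x w)" using Q(3) pw gc w by (simp add: \<beta>'_def)
      also have "\<dots> = inner (\<pi> x (Q u)) w" using skew[OF ri] by simp
      finally show "inner (Q (\<pi> x u)) w = inner (\<pi> x (Q u)) w" .
    qed
  qed
  have Qsym: "\<forall>u\<in>U. \<forall>w\<in>U. inner (Q u) w = inner u (Q w)"
    using Q(3) by (simp add: \<beta>'_def inner_commute)
  obtain l where l: "\<forall>u\<in>U. Q u = l *\<^sub>R u"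
    using sym_scalar[OF irr pl Q(1) _ Qc Qsym] Q(2) by blast
  have "l * inner u0 u0 = inner (g u0) (g u0)" using Q(3) l u0(1) by (metis \<beta>'_def inner_scaleR_left)
  moreover have "inner (g u0) (g u0) > 0" using u0(2) by simp
  moreover have "inner u0 u0 > 0" using u0(2) gl by (auto simp: linear_0)
  ultimately have lpos: "l > 0" by (metis zero_less_mult_pos2)
  define k where "k = 1 / sqrt l"
  have kk: "k * k * l = 1" using lpos by (simp add: k_def)
  define h where "h u = k *\<^sub>R g u" for u
  show ?thesis
  proof (rule good_from_skew[OF Us])
    show "\<forall>x. \<forall>v\<in>U. \<pi> x v \<in> U" using Ui by blast
    show "linear h" unfolding h_def
      by (rule linearI) (simp_all add: linear_add[OF gl] linear_scale[OF gl] algebra_simps)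
    show "\<forall>v\<in>U. h v \<in> U" using gU Us by (simp add: h_def subspace_mul)
    show "\<forall>x. \<forall>v\<in>U. h (\<pi> x v) = \<pi> x (h v)" using gc by (simp add: h_def linear_scale[OF pl])
    show "\<forall>v\<in>U. \<forall>w\<in>U. inner (h v) w + inner v (h w) = 0"
      using gskew by (simp add: h_def flip: distrib_left)
    show "\<forall>v\<in>U. \<forall>w\<in>U. inner (h v) (h w) = inner v w"
    proof (intro ballI)
      fix v w assume vw: "v \<in> U" "w \<in> U"
      have "inner (g v) (g w) = l * inner v w" using Q(3) l vw by (metis \<beta>'_def inner_scaleR_left)
      then have "inner (h v) (h w) = (k * k * l) * inner v w" by (simp add: h_def)
      then show "inner (h v) (h w) = inner v w" using kk by simp
    qed
  qed
qed

lemma proj_sum: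
  assumes "subspace U" "linear P" "\<forall>x. P x \<in> U" "\<forall>u\<in>U. P u = u" "\<forall>x. x - P x \<in> orth U"
    "a \<in> U" "b \<in> orth U"
  shows "P (a + b) = a"
  using proj_orth_zero[OF assms(1,3,5,7)] assms(4,6) linear_add[OF assms(2)] by simp

lemma good_pair:
  fixes \<pi> :: "'h \<Rightarrow> 'v::euclidean_space \<Rightarrow> 'v"
  assumes ri: "rep_invariant_inner \<pi>" and pl: "\<And>x. linear (\<pi> x)"
    and irr: "irreducible_subrep \<pi> U" and irr': "irreducible_subrep \<pi> U'"
    and orthUU: "\<forall>a\<in>U. \<forall>b\<in>U'. inner a b = 0" and iso: "rep_isomorphic \<pi> U' U"
  shows "\<exists>J. good \<pi> {a + b | a b. a \<in> U \<and> b \<in> U'} J"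
proof -
  note Us = irr_D(1)[OF irr] and Ui = irr_D(3)[OF irr]
  note Us' = irr_D(1)[OF irr'] and Ui' = irr_D(3)[OF irr']
  have invU: "invariant_subspace \<pi> U" and invU': "invariant_subspace \<pi> U'"
    using irr irr' by (auto simp: irreducible_subrep_def)
  obtain h where h: "intertwiner \<pi> U U' h" "bij_betw h U U'"
    using iso_sym[OF invU' iso] unfolding rep_isomorphic_def by blast
  obtain h' where h': "intertwiner \<pi> U' U h'" "bij_betw h' U' U" "\<forall>u\<in>U. h' (h u) = u" "\<forall>w\<in>U'. h (h' w) = w"
    using iso_inverse[OF invU h] by blast
  have hl: "linear h" and hU: "\<forall>u\<in>U. h u \<in> U'" and hc: "\<forall>x. \<forall>u\<in>U. h (\<pi> x u) = \<pi> x (h u)"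
    using h(1) by (auto simp: intertwiner_def)
  have hl': "linear h'" and hU': "\<forall>u\<in>U'. h' u \<in> U" and hc': "\<forall>x. \<forall>u\<in>U'. h' (\<pi> x u) = \<pi> x (h' u)"
    using h'(1) by (auto simp: intertwiner_def)
  define \<beta>' where "\<beta>' u w = inner (h u) (h w)" for u w
  have l1': "linear (\<lambda>u. \<beta>' u w)" for w
    by (rule linearI) (simp_all add: \<beta>'_def linear_add[OF hl] linear_scale[OF hl] inner_add_left)
  have l2': "linear (\<beta>' u)" for u
    by (rule linearI) (simp_all add: \<beta>'_def linear_add[OF hl] linear_scale[OF hl] inner_add_right)
  obtain Q where Q: "linear Q" "\<forall>u. Q u \<in> U" "\<forall>u. \<forall>w\<in>U. inner (Q u) w = \<beta>' u w"
    using form_op[OF Us l1' l2'] by blast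
  have Qc: "\<forall>x. \<forall>u\<in>U. Q (\<pi> x u) = \<pi> x (Q u)"
  proof (intro allI ballI)
    fix x u assume u: "u \<in> U"
    show "Q (\<pi> x u) = \<pi> x (Q u)"
    proof (rule inner_eq_on_subspace[OF Us])
      show "Q (\<pi> x u) \<in> U" "\<pi> x (Q u) \<in> U" using Q(2) Ui by auto
      fix w assume w: "w \<in> U"
      have pw: "\<pi> x w \<in> U" using Ui w by blast
      have "inner (Q (\<pi> x u)) w = inner (\<pi> x (h u)) (h w)" using Q(3) w hc u by (simp add: \<beta>'_def)
      also have "\<dots> = - inner (h u) (\<pi> x (h w))" using skew[OF ri] by simp
      also have "\<dots> = - inner (Q u) (\<pi> x w)" using Q(3) pw hc w by (simp add: \<beta>'_def)
      also have "\<dots> = inner (\<pi> x (Q u)) w" using skew[OF ri] by simp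
      finally show "inner (Q (\<pi> x u)) w = inner (\<pi> x (Q u)) w" .
    qed
  qed
  have Qsym: "\<forall>u\<in>U. \<forall>w\<in>U. inner (Q u) w = inner u (Q w)"
    using Q(3) by (simp add: \<beta>'_def inner_commute)
  obtain l where l: "\<forall>u\<in>U. Q u = l *\<^sub>R u"
    using sym_scalar[OF irr pl Q(1) _ Qc Qsym] Q(2) by blast
  obtain u0 where u0: "u0 \<in> U" "u0 \<noteq> 0" using irr_D(2)[OF irr] Us subspace_0 by blast
  have "h u0 \<noteq> 0"
  proof
    assume "h u0 = 0"
    then have "h u0 = h 0" using linear_0[OF hl] by simp
    then show False using h(2) u0 Us subspace_0 by (metis bij_betw_def inj_on_def)
  qed
  have "l * inner u0 u0 = inner (h u0) (h u0)" using Q(3) l u0(1) by (metis \<beta>'_def inner_scaleR_left)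
  moreover have "inner (h u0) (h u0) > 0" using \<open>h u0 \<noteq> 0\<close> by simp
  moreover have "inner u0 u0 > 0" using u0(2) by simp
  ultimately have lpos: "l > 0" by (metis zero_less_mult_pos2)
  define k where "k = 1 / sqrt l"
  have kk: "k * k * l = 1" using lpos by (simp add: k_def)
  have k0: "k \<noteq> 0" using lpos by (simp add: k_def)
  define \<phi> where "\<phi> u = k *\<^sub>R h u" for u
  define \<psi> where "\<psi> w = (1 / k) *\<^sub>R h' w" for w
  have \<phi>l: "linear \<phi>" unfolding \<phi>_def
    by (rule linearI) (simp_all add: linear_add[OF hl] linear_scale[OF hl] algebra_simps)
  have \<psi>l: "linear \<psi>" unfolding \<psi>_def
    by (rule linearI) (simp_all add: linear_add[OF hl'] linear_scale[OF hl'] algebra_simps)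
  have \<phi>U: "\<forall>u\<in>U. \<phi> u \<in> U'" using hU Us' by (simp add: \<phi>_def subspace_mul)
  have \<psi>U: "\<forall>u\<in>U'. \<psi> u \<in> U" using hU' Us by (simp add: \<psi>_def subspace_mul)
  have \<phi>c: "\<forall>x. \<forall>v\<in>U. \<phi> (\<pi> x v) = \<pi> x (\<phi> v)" using hc by (simp add: \<phi>_def linear_scale[OF pl])
  have \<psi>c: "\<forall>x. \<forall>v\<in>U'. \<psi> (\<pi> x v) = \<pi> x (\<psi> v)" using hc' by (simp add: \<psi>_def linear_scale[OF pl])
  have \<psi>\<phi>: "\<forall>u\<in>U. \<psi> (\<phi> u) = u" using h'(3) k0 by (simp add: \<phi>_def \<psi>_def linear_scale[OF hl'])
  have \<phi>\<psi>: "\<forall>w\<in>U'. \<phi> (\<psi> w) = w" using h'(4) k0 by (simp add: \<phi>_def \<psi>_def linear_scale[OF hl])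
  have \<phi>i: "\<forall>v\<in>U. \<forall>w\<in>U. inner (\<phi> v) (\<phi> w) = inner v w"
  proof (intro ballI)
    fix v w assume vw: "v \<in> U" "w \<in> U"
    have "inner (h v) (h w) = l * inner v w" using Q(3) l vw by (metis \<beta>'_def inner_scaleR_left)
    then have "inner (\<phi> v) (\<phi> w) = (k * k * l) * inner v w" by (simp add: \<phi>_def)
    then show "inner (\<phi> v) (\<phi> w) = inner v w" using kk by simp
  qed
  have \<psi>i: "\<forall>v\<in>U'. \<forall>w\<in>U'. inner (\<psi> v) (\<psi> w) = inner v w"
    using \<phi>i \<psi>U \<phi>\<psi> by metis
  obtain P where P: "linear P" "\<forall>x. P x \<in> U" "\<forall>u\<in>U. P u = u" "\<forall>x. x - P x \<in> orth U"
    using proj_exists[OF Us] by blast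
  obtain P' where P': "linear P'" "\<forall>x. P' x \<in> U'" "\<forall>u\<in>U'. P' u = u" "\<forall>x. x - P' x \<in> orth U'"
    using proj_exists[OF Us'] by blast
  have inU: "b \<in> orth U" if "b \<in> U'" for b using orthUU that by (auto simp: orth_def inner_commute)
  have inU': "a \<in> orth U'" if "a \<in> U" for a using orthUU that by (auto simp: orth_def)
  have Pab: "P (a + b) = a" if "a \<in> U" "b \<in> U'" for a b
    using proj_sum[OF Us P that(1) inU[OF that(2)]] .
  have P'ab: "P' (a + b) = b" if "a \<in> U" "b \<in> U'" for a b
    using proj_sum[OF Us' P' that(2) inU'[OF that(1)]] by (simp add: add.commute)
  define K where "K v = \<phi> (P v) - \<psi> (P' v)" for v
  have Kab: "K (a + b) = (- \<psi> b) + \<phi> a" if "a \<in> U" "b \<in> U'" for a b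
    using Pab[OF that] P'ab[OF that] by (simp add: K_def)
  have Kin: "- \<psi> b \<in> U" "\<phi> a \<in> U'" if "a \<in> U" "b \<in> U'" for a b
    using \<psi>U \<phi>U that Us by (auto simp: subspace_neg)
  define A where "A = {a + b | a b. a \<in> U \<and> b \<in> U'}"
  show ?thesis unfolding A_def[symmetric]
  proof (rule good_extend)
    show "subspace A" unfolding A_def using Us Us' by (rule subspace_sums)
    show "linear K" unfolding K_def using \<phi>l \<psi>l P(1) P'(1)
      by (intro linear_compose_sub linear_compose[of P \<phi>, unfolded comp_def] linear_compose[of P' \<psi>, unfolded comp_def])
    show "\<forall>v\<in>A. K v \<in> A"
      unfolding A_def using Kab Kin by blast
    show "\<forall>v\<in>A. K (K v) = - v"
      unfolding A_def
    proof (clarify)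
      fix a b assume ab: "a \<in> U" "b \<in> U'"
      have "K (K (a + b)) = - \<psi> (\<phi> a) + \<phi> (- \<psi> b)" using Kab[OF ab] Kab[OF Kin[OF ab]] by simp
      also have "\<dots> = - (a + b)" using \<psi>\<phi> \<phi>\<psi> ab linear_neg[OF \<phi>l] by simp
      finally show "K (K (a + b)) = - (a + b)" .
    qed
    show "\<forall>v\<in>A. \<forall>w\<in>A. inner (K v) (K w) = inner v w"
      unfolding A_def
    proof (clarify)
      fix a b a' b' assume ab: "a \<in> U" "b \<in> U'" "a' \<in> U" "b' \<in> U'"
      have "\<psi> b \<in> U" "\<psi> b' \<in> U" "\<phi> a \<in> U'" "\<phi> a' \<in> U'" using \<psi>U \<phi>U ab by auto
      then have o1: "inner (\<psi> b) (\<phi> a') = 0" "inner (\<phi> a) (\<psi> b') = 0" using orthUU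
        by (auto simp: inner_commute)
      have o2: "inner a b' = 0" "inner b a' = 0" using orthUU ab by (auto simp: inner_commute)
      have "inner (K (a + b)) (K (a' + b')) = inner (\<psi> b) (\<psi> b') + inner (\<phi> a) (\<phi> a')"
        using Kab ab o1 by (simp add: inner_diff_left inner_diff_right inner_commute)
      also have "\<dots> = inner (a + b) (a' + b')"
        using \<psi>i \<phi>i ab o2 by (simp add: inner_add_left inner_add_right)
      finally show "inner (K (a + b)) (K (a' + b')) = inner (a + b) (a' + b')" .
    qed
    show "\<forall>x. \<forall>v\<in>A. K (\<pi> x v) = \<pi> x (K v)"
      unfolding A_def
    proof (clarify)
      fix x a b assume ab: "a \<in> U" "b \<in> U'"
      have pab: "\<pi> x a \<in> U" "\<pi> x b \<in> U'" using Ui Ui' ab by auto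
      have "K (\<pi> x (a + b)) = K (\<pi> x a + \<pi> x b)" using linear_add[OF pl] by simp
      also have "\<dots> = - \<psi> (\<pi> x b) + \<phi> (\<pi> x a)" using Kab[OF pab] .
      also have "\<dots> = \<pi> x (- \<psi> b + \<phi> a)" using \<phi>c \<psi>c ab linear_add[OF pl] linear_neg[OF pl] linear_diff[OF pl] by simp
      also have "\<dots> = \<pi> x (K (a + b))" using Kab[OF ab] by simp
      finally show "K (\<pi> x (a + b)) = \<pi> x (K (a + b))" .
    qed
    show "\<forall>x. \<forall>v\<in>A. \<pi> x v \<in> A"
      unfolding A_def
    proof (clarify)
      fix x a b assume ab: "a \<in> U" "b \<in> U'"
      have "\<pi> x (a + b) = \<pi> x a + \<pi> x b" using linear_add[OF pl] by simp
      moreover have "\<pi> x a \<in> U" "\<pi> x b \<in> U'" using Ui Ui' ab by auto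
      ultimately show "\<exists>a' b'. \<pi> x (a + b) = a' + b' \<and> a' \<in> U \<and> b' \<in> U'" by blast
    qed
  qed
qed

lemma sum_invariant:
  assumes pl: "\<And>x. linear (\<pi> x)" and "invariant_subspace \<pi> U" "invariant_subspace \<pi> U'"
  shows "invariant_subspace \<pi> {a + b | a b. a \<in> U \<and> b \<in> U'}"
  unfolding invariant_subspace_def
proof (intro conjI allI ballI)
  show "subspace {a + b | a b. a \<in> U \<and> b \<in> U'}" using assms by (intro subspace_sums) (auto simp: invariant_subspace_def)
  fix x v assume "v \<in> {a + b | a b. a \<in> U \<and> b \<in> U'}"
  then obtain a b where ab: "a \<in> U" "b \<in> U'" "v = a + b" by blast
  have "\<pi> x v = \<pi> x a + \<pi> x b" using ab(3) linear_add[OF pl] by simp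
  moreover have "\<pi> x a \<in> U" "\<pi> x b \<in> U'" using assms ab by (auto simp: invariant_subspace_def)
  ultimately show "\<pi> x v \<in> {a + b | a b. a \<in> U \<and> b \<in> U'}" by blast
qed

lemma orth_sum:
  assumes "0 \<in> U" "0 \<in> U'"
  shows "orth {a + b | a b. a \<in> U \<and> b \<in> U'} = orth U \<inter> orth U'"
proof
  show "orth {a + b | a b. a \<in> U \<and> b \<in> U'} \<subseteq> orth U \<inter> orth U'"
  proof
    fix v assume v: "v \<in> orth {a + b | a b. a \<in> U \<and> b \<in> U'}"
    have "a \<in> {a + b | a b. a \<in> U \<and> b \<in> U'}" if "a \<in> U" for a
    proof -
      have "a = a + 0" by simp
      then show ?thesis using that assms by blast
    qed
    then have "v \<in> orth U" using v unfolding orth_def by blast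
    have "b \<in> {a + b | a b. a \<in> U \<and> b \<in> U'}" if "b \<in> U'" for b
    proof -
      have "b = 0 + b" by simp
      then show ?thesis using that assms by blast
    qed
    then have "v \<in> orth U'" using v unfolding orth_def by blast
    then show "v \<in> orth U \<inter> orth U'" using \<open>v \<in> orth U\<close> by blast
  qed
  show "orth U \<inter> orth U' \<subseteq> orth {a + b | a b. a \<in> U \<and> b \<in> U'}"
    unfolding orth_def by (auto simp: inner_add_right)
qed

lemma mult_cons:
  "multiplicity_in \<pi> (U # Ds) W = (if rep_isomorphic \<pi> U W then 1 else 0) + multiplicity_in \<pi> Ds W"
  unfolding mult_filter by simp

lemma orth_comm: "a \<in> U \<Longrightarrow> b \<in> orth U \<Longrightarrow> inner a b = 0"
  unfolding orth_def by (simp add: inner_commute)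

lemma construct:
  fixes \<pi> :: "'h \<Rightarrow> 'v::euclidean_space \<Rightarrow> 'v"
  assumes ri: "rep_invariant_inner \<pi>" and pl: "\<And>x. linear (\<pi> x)"
  shows "invariant_subspace \<pi> S \<Longrightarrow>
    (\<forall>W Ds. irreducible_subrep \<pi> W \<and> real_type \<pi> W \<and> dec \<pi> S Ds \<longrightarrow> even (multiplicity_in \<pi> Ds W))
    \<Longrightarrow> \<exists>J. good \<pi> S J"
proof (induction "dim S" arbitrary: S rule: less_induct)
  case less
  note hyp = less.prems(2)
  show ?case
  proof (cases "S = {0}")
    case True
    then show ?thesis using good_zero[of \<pi>, OF pl] by blast
  next
    case False
    obtain U where U: "irreducible_subrep \<pi> U" "U \<subseteq> S" using irr_exists[OF less.prems(1) False] by blast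
    have Ss: "subspace S" using less.prems(1) by (simp add: invariant_subspace_def)
    have Us: "subspace U" using irr_D(1)[OF U(1)] .
    have invU: "invariant_subspace \<pi> U" using U(1) by (simp add: irreducible_subrep_def)
    define S1 where "S1 = S \<inter> orth U"
    have inv1: "invariant_subspace \<pi> S1"
      unfolding S1_def using invariant_Int[OF less.prems(1) orth_invariant[OF ri pl invU]] .
    have S1s: "subspace S1" using inv1 by (simp add: invariant_subspace_def)
    have "dim U > 0" using irr_D(2)[OF U(1)] Us dim_eq_0 subspace_0 by fastforce
    then have dim1: "dim S1 < dim S" using orth_dim[OF Us Ss U(2)] by (simp add: S1_def)
    have sumS: "{a + b | a b. a \<in> U \<and> b \<in> S1} = S" unfolding S1_def using sum_orth[OF Us Ss U(2)] .
    have US1: "\<forall>a\<in>U. \<forall>b\<in>S1. inner a b = 0" using orth_comm by (auto simp: S1_def)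
    show ?thesis
    proof (cases "real_type \<pi> U")
      case False
      obtain JU where JU: "good \<pi> U JU" using good_nonreal[OF ri pl U(1) False] by blast
      have "\<forall>W Ds. irreducible_subrep \<pi> W \<and> real_type \<pi> W \<and> dec \<pi> S1 Ds \<longrightarrow> even (multiplicity_in \<pi> Ds W)"
      proof (intro allI impI)
        fix W Ds assume a: "irreducible_subrep \<pi> W \<and> real_type \<pi> W \<and> dec \<pi> S1 Ds"
        have "dec \<pi> S (U # Ds)" using dec_cons[OF Ss U] a by (simp add: S1_def)
        then have "even (multiplicity_in \<pi> (U # Ds) W)" using hyp a by blast
        moreover have "\<not> rep_isomorphic \<pi> U W" using real_type_transport[OF invU] a False by blast
        ultimately show "even (multiplicity_in \<pi> Ds W)" by (simp add: mult_cons)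
      qed
      then obtain J1 where J1: "good \<pi> S1 J1" using less.hyps[OF dim1 inv1] by blast
      have "good \<pi> {a + b | a b. a \<in> U \<and> b \<in> S1} (\<lambda>v. JU v + J1 v)"
        using good_sum[OF pl Us _ S1s _ US1 JU J1] irr_D(3)[OF U(1)] inv1
        by (auto simp: invariant_subspace_def)
      then show ?thesis using sumS by auto
    next
      case True
      obtain Ds0 where Ds0: "dec \<pi> S1 Ds0" using dec_exists[OF ri pl inv1] by blast
      have "dec \<pi> S (U # Ds0)" using dec_cons[OF Ss U] Ds0 by (simp add: S1_def)
      then have "even (multiplicity_in \<pi> (U # Ds0) U)" using hyp U(1) True by blast
      then have "odd (multiplicity_in \<pi> Ds0 U)" by (simp add: mult_cons iso_refl)
      then have "length (filter (\<lambda>X. rep_isomorphic \<pi> X U) Ds0) \<noteq> 0" unfolding mult_filter by (metis even_zero)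
      then have "filter (\<lambda>X. rep_isomorphic \<pi> X U) Ds0 \<noteq> []" by auto
      then obtain U' where U': "U' \<in> set Ds0" "rep_isomorphic \<pi> U' U"
        unfolding filter_empty_conv by blast
      have irr': "irreducible_subrep \<pi> U'" using Ds0 U'(1) by (simp add: dec_def)
      have "U' \<subseteq> \<Union>(set Ds0)" using U'(1) by (rule Union_upper)
      then have "U' \<subseteq> span (\<Union>(set Ds0))" using span_superset by (rule order_trans)
      then have U'S1: "U' \<subseteq> S1" using Ds0 by (simp add: dec_def)
      have Us': "subspace U'" using irr_D(1)[OF irr'] .
      have invU': "invariant_subspace \<pi> U'" using irr' by (simp add: irreducible_subrep_def)
      have UU': "\<forall>a\<in>U. \<forall>b\<in>U'. inner a b = 0"
      proof (intro ballI)
        fix a b assume "a \<in> U" "b \<in> U'"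
        then show "inner a b = 0" using US1 U'S1 by auto
      qed
      define A where "A = {a + b | a b. a \<in> U \<and> b \<in> U'}"
      obtain JA where JA: "good \<pi> A JA" using good_pair[OF ri pl U(1) irr' UU' U'(2)] unfolding A_def by blast
      have invA: "invariant_subspace \<pi> A" unfolding A_def by (rule sum_invariant[OF pl invU invU'])
      have As: "subspace A" using invA by (simp add: invariant_subspace_def)
      have AS: "A \<subseteq> S" unfolding A_def
      proof (clarify)
        fix a b assume "a \<in> U" "b \<in> U'"
        then have "a \<in> S" "b \<in> S" using U(2) U'S1 by (auto simp: S1_def)
        then show "a + b \<in> S" by (simp add: subspace_add[OF Ss])
      qed
      have UA: "U \<subseteq> A" unfolding A_def
      proof
        fix u assume "u \<in> U"
        moreover have "u = u + 0" by simp
        ultimately show "u \<in> {a + b | a b. a \<in> U \<and> b \<in> U'}" using subspace_0[OF Us'] by blast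
      qed
      define S2 where "S2 = S \<inter> orth A"
      have S2eq: "S2 = S1 \<inter> orth U'"
        unfolding S2_def S1_def A_def using orth_sum[OF subspace_0[OF Us] subspace_0[OF Us']] by auto
      have inv2: "invariant_subspace \<pi> S2"
        unfolding S2_def using invariant_Int[OF less.prems(1) orth_invariant[OF ri pl invA]] .
      have S2s: "subspace S2" using inv2 by (simp add: invariant_subspace_def)
      have "dim A \<ge> dim U" using UA by (rule dim_subset)
      then have "dim A > 0" using \<open>dim U > 0\<close> by linarith
      then have dim2: "dim S2 < dim S" using orth_dim[OF As Ss AS] by (simp add: S2_def)
      have "\<forall>W Ds. irreducible_subrep \<pi> W \<and> real_type \<pi> W \<and> dec \<pi> S2 Ds \<longrightarrow> even (multiplicity_in \<pi> Ds W)"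
      proof (intro allI impI)
        fix W Es assume a: "irreducible_subrep \<pi> W \<and> real_type \<pi> W \<and> dec \<pi> S2 Es"
        have "dec \<pi> S1 (U' # Es)" using dec_cons[OF S1s irr' U'S1] a S2eq by simp
        then have "dec \<pi> S (U # U' # Es)" using dec_cons[OF Ss U] by (simp add: S1_def)
        then have "even (multiplicity_in \<pi> (U # U' # Es) W)" using hyp a by blast
        moreover have "rep_isomorphic \<pi> U' W \<longleftrightarrow> rep_isomorphic \<pi> U W"
          using iso_trans[OF U'(2)] iso_trans[OF iso_sym[OF invU' U'(2)]] by blast
        ultimately show "even (multiplicity_in \<pi> Es W)" by (simp add: mult_cons split: if_splits)
      qed
      then obtain J2 where J2: "good \<pi> S2 J2" using less.hyps[OF dim2 inv2] by blast
      have AS2: "\<forall>a\<in>A. \<forall>b\<in>S2. inner a b = 0" using orth_comm by (auto simp: S2_def)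
      have "good \<pi> {a + b | a b. a \<in> A \<and> b \<in> S2} (\<lambda>v. JA v + J2 v)"
        using good_sum[OF pl As _ S2s _ AS2 JA J2] invA inv2
        by (auto simp: invariant_subspace_def)
      moreover have "{a + b | a b. a \<in> A \<and> b \<in> S2} = S" unfolding S2_def using sum_orth[OF As Ss AS] .
      ultimately show ?thesis by auto
    qed
  qed
qed

lemma orth_pair:
  fixes e f v :: "'a::euclidean_space"
  assumes "inner v e = 0" "inner v f = 0"
  shows "v \<in> orth (span {e, f})"
proof -
  have "orthogonal v a" if "a \<in> span {e, f}" for a
    using orthogonal_to_span[OF that] assms by (auto simp: orthogonal_def)
  then show ?thesis by (auto simp: orth_def orthogonal_def)
qed

lemma even_dim:
  fixes J :: "'a::euclidean_space \<Rightarrow> 'a"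
  assumes J: "linear J"
  shows "subspace E \<Longrightarrow> \<forall>v\<in>E. J v \<in> E \<Longrightarrow> \<forall>v\<in>E. J (J v) = - v \<Longrightarrow>
    \<forall>v\<in>E. \<forall>w\<in>E. inner (J v) (J w) = inner v w \<Longrightarrow> even (dim E)"
proof (induction "dim E" arbitrary: E rule: less_induct)
  case less
  show ?case
  proof (cases "E = {0}")
    case True then show ?thesis by simp
  next
    case False
    then obtain e where e: "e \<in> E" "e \<noteq> 0" using less.prems(1) subspace_0 by blast
    have Je: "J e \<in> E" using less.prems(2) e by blast
    have "inner (J e) (J (J e)) = inner e (J e)" using less.prems(4) e Je by blast
    then have "- inner (J e) e = inner e (J e)" using less.prems(3) e by simp
    then have eJe: "inner e (J e) = 0" by (simp add: inner_commute)
    have nJe: "J e \<noteq> 0" using e less.prems(3) J by (metis linear_0 neg_equal_0_iff_equal)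
    have neq: "e \<noteq> J e" using eJe e by auto
    define A where "A = span {e, J e}"
    have indep: "independent {e, J e}"
      by (rule pairwise_orthogonal_independent) (use e nJe eJe in \<open>auto simp: pairwise_def orthogonal_def inner_commute\<close>)
    have dA: "dim A = 2" unfolding A_def using dim_span_eq_card_independent[OF indep] neq by simp
    have As: "subspace A" unfolding A_def by simp
    have AE: "A \<subseteq> E" unfolding A_def using e Je less.prems(1) by (simp add: span_minimal)
    define E' where "E' = E \<inter> orth A"
    have E's: "subspace E'" unfolding E'_def using less.prems(1) subspace_orth by (rule subspace_inter)
    have dimE: "dim A + dim E' = dim E" unfolding E'_def by (rule orth_dim[OF As less.prems(1) AE])
    have eA: "e \<in> A" "J e \<in> A" unfolding A_def by (auto intro: span_base)
    have JE': "\<forall>v\<in>E'. J v \<in> E'"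
    proof
      fix v assume v: "v \<in> E'"
      then have vE: "v \<in> E" and v0: "inner v e = 0" "inner v (J e) = 0"
        using eA by (auto simp: E'_def orth_def)
      have JvE: "J v \<in> E" using less.prems(2) vE by blast
      have "inner (J v) e = - inner (J v) (J (J e))" using less.prems(3) e by simp
      also have "\<dots> = - inner v (J e)" using less.prems(4) vE Je by simp
      finally have 1: "inner (J v) e = 0" using v0 by simp
      have "inner (J v) (J e) = inner v e" using less.prems(4) vE e by simp
      then have 2: "inner (J v) (J e) = 0" using v0 by simp
      show "J v \<in> E'" using JvE orth_pair[OF 1 2] by (simp add: E'_def A_def)
    qed
    have "even (dim E')"
      using less.hyps[of E'] dimE dA E's JE' less.prems(3,4) by (simp add: E'_def)
    moreover have "dim E = dim E' + 2" using dimE dA by simp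
    ultimately show ?thesis by simp
  qed
qed

lemma dec_proj:
  fixes \<pi> :: "'h \<Rightarrow> 'v::euclidean_space \<Rightarrow> 'v"
  assumes pl: "\<And>x. linear (\<pi> x)" and D: "dec \<pi> UNIV Us"
  shows "\<exists>P. (\<forall>i<length Us. linear (P i) \<and> (\<forall>v. P i v \<in> Us!i) \<and> (\<forall>u\<in>Us!i. P i u = u) \<and>
     (\<forall>j<length Us. j \<noteq> i \<longrightarrow> (\<forall>u\<in>Us!j. P i u = 0)) \<and> (\<forall>x v. P i (\<pi> x v) = \<pi> x (P i v))) \<and>
     (\<forall>v. (\<Sum>i<length Us. P i v) = v)"
proof -
  define n where "n = length Us"
  have irrU: "irreducible_subrep \<pi> (Us!i)" if "i < n" for i using D that by (simp add: dec_def n_def)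
  have Us: "subspace (Us!i)" if "i < n" for i using irr_D(1)[OF irrU[OF that]] .
  have Ui: "\<pi> x u \<in> Us!i" if "i < n" "u \<in> Us!i" for i x u using irr_D(3)[OF irrU[OF that(1)] that(2)] .
  have "\<forall>i. \<exists>B. B \<subseteq> Us!i \<and> independent B \<and> Us!i \<subseteq> span B \<and> card B = dim (Us!i)"
    by (meson basis_exists)
  then obtain B where B: "\<And>i. B i \<subseteq> Us!i" "\<And>i. independent (B i)" "\<And>i. Us!i \<subseteq> span (B i)"
    "\<And>i. card (B i) = dim (Us!i)" by metis
  have finB: "finite (B i)" for i using B(2) by (rule finiteI_independent)
  define T where "T = Sigma {..<n} B"
  define BB where "BB = (\<Union>i<n. B i)"
  have finT: "finite T" unfolding T_def using finB by simp
  have cardT: "card T = dim (UNIV :: 'v set)"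
  proof -
    have "card T = (\<Sum>i<n. card (B i))" unfolding T_def using finB by simp
    also have "\<dots> = (\<Sum>i<n. dim (Us!i))" using B(4) by simp
    also have "\<dots> = sum_list (map dim Us)" unfolding n_def sum_list_map_nth ..
    also have "\<dots> = dim (UNIV :: 'v set)" using D by (simp add: dec_def)
    finally show ?thesis .
  qed
  have BBT: "BB = snd ` T" unfolding BB_def T_def by force
  have finBB: "finite BB" unfolding BB_def using finB by simp
  have spBB: "UNIV \<subseteq> span BB"
  proof -
    have "\<Union>(set Us) \<subseteq> span BB"
    proof
      fix u assume "u \<in> \<Union>(set Us)"
      then obtain i where i: "i < n" "u \<in> Us!i" by (auto simp: n_def in_set_conv_nth)
      have "B i \<subseteq> BB" using i(1) by (auto simp: BB_def)
      then have "span (B i) \<subseteq> span BB" by (rule span_mono)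
      then show "u \<in> span BB" using B(3) i by blast
    qed
    then have "span (\<Union>(set Us)) \<subseteq> span BB" by (rule span_minimal) simp
    then show ?thesis using D by (simp add: dec_def)
  qed
  have "dim (UNIV :: 'v set) \<le> card BB" using dim_le_card[OF spBB finBB] .
  moreover have "card BB \<le> card T" unfolding BBT using finT by (rule card_image_le)
  ultimately have "card BB = card T" using cardT by linarith
  then have "card (snd ` T) = card T" unfolding BBT .
  then have injT: "inj_on snd T" using finT by (simp add: eq_card_imp_inj_on)
  have disj: "b \<notin> B j" if "i < n" "j < n" "i \<noteq> j" "b \<in> B i" for i j b
  proof
    assume "b \<in> B j"
    then have "(i, b) \<in> T" "(j, b) \<in> T" using that by (auto simp: T_def)
    then have "(i, b) = (j, b)" using inj_onD[OF injT, of "(i,b)" "(j,b)"] by simp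
    then show False using that(3) by simp
  qed
  have "card BB \<le> dim (UNIV :: 'v set)" using \<open>card BB \<le> card T\<close> cardT by linarith
  then have indep: "independent BB"
    using card_le_dim_spanning[OF subset_UNIV spBB finBB] by blast
  have "\<forall>i. \<exists>g. linear g \<and> (\<forall>x\<in>BB. g x = (if x \<in> B i then x else 0))"
  proof
    fix i show "\<exists>g. linear g \<and> (\<forall>x\<in>BB. g x = (if x \<in> B i then x else 0))"
      using linear_independent_extend[OF indep, of "\<lambda>x. if x \<in> B i then x else 0"] by simp
  qed
  from choice[OF this] obtain P where P0: "\<forall>i. linear (P i) \<and> (\<forall>x\<in>BB. P i x = (if x \<in> B i then x else 0))"
    by blast
  have P: "\<And>i. linear (P i)" "\<And>i x. x \<in> BB \<Longrightarrow> P i x = (if x \<in> B i then x else 0)"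
    using P0 by blast+
  have BiBB: "B i \<subseteq> BB" if "i < n" for i unfolding BB_def using that by blast
  have fix_i: "P i u = u" if "i < n" "u \<in> Us!i" for i u
  proof -
    have "P i u = id u"
    proof (rule linear_eq_on[OF P(1) linear_id])
      show "u \<in> span (B i)" using B(3) that by blast
      fix b assume "b \<in> B i"
      moreover then have "b \<in> BB" using BiBB[OF that(1)] by blast
      ultimately show "P i b = id b" using P(2) by simp
    qed
    then show ?thesis by simp
  qed
  have zero_j: "P i u = 0" if "i < n" "j < n" "j \<noteq> i" "u \<in> Us!j" for i j u
  proof -
    have "P i u = (\<lambda>_. 0) u"
    proof (rule linear_eq_on[OF P(1) linear_zero])
      show "u \<in> span (B j)" using B(3) that by blast
      fix b assume "b \<in> B j"
      moreover then have "b \<in> BB" using BiBB[OF that(2)] by blast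
      moreover have "b \<notin> B i" using disj[OF that(2,1,3) \<open>b \<in> B j\<close>] .
      ultimately show "P i b = 0" using P(2) by simp
    qed
    then show ?thesis by simp
  qed
  have img: "P i v \<in> Us!i" if "i < n" for i v
  proof -
    have "v \<in> span BB" using spBB by blast
    moreover have "subspace (P i -` (Us!i))" using linear_subspace_vimage[OF P(1) Us[OF that]] .
    ultimately have "v \<in> P i -` (Us!i)"
    proof (rule span_induct[where P="\<lambda>v. v \<in> P i -` (Us!i)", unfolded Collect_mem_eq])
      fix b assume "b \<in> BB"
      then show "b \<in> P i -` (Us!i)" using P(2) B(1) subspace_0[OF Us[OF that]] by auto
    qed
    then show ?thesis by simp
  qed
  have sum: "(\<Sum>i<n. P i v) = v" for v
  proof -
    have "(\<Sum>i<n. P i v) = id v"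
    proof (rule linear_eq_on[OF linear_compose_sum linear_id])
      show "\<forall>a\<in>{..<n}. linear (P a)" using P(1) by blast
      show "v \<in> span BB" using spBB by blast
      fix b assume b: "b \<in> BB"
      then obtain j where j: "j < n" "b \<in> B j" by (auto simp: BB_def)
      have "(\<Sum>i<n. P i b) = (\<Sum>i<n. if i = j then b else 0)"
        using P(2)[OF b] disj j by (intro sum.cong) auto
      also have "\<dots> = b" using j by simp
      finally show "(\<Sum>i<n. P i b) = id b" by simp
    qed
    then show ?thesis by simp
  qed
  have comm: "P i (\<pi> x v) = \<pi> x (P i v)" if "i < n" for i x v
  proof -
    have "\<pi> x v = \<pi> x (\<Sum>j<n. P j v)" using sum[of v] by simp
    also have "\<dots> = (\<Sum>j<n. \<pi> x (P j v))" by (rule linear_sum[OF pl])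
    finally have "P i (\<pi> x v) = P i (\<Sum>j<n. \<pi> x (P j v))" by simp
    also have "\<dots> = (\<Sum>j<n. P i (\<pi> x (P j v)))" by (rule linear_sum[OF P(1)])
    finally have "P i (\<pi> x v) = (\<Sum>j<n. P i (\<pi> x (P j v)))" .
    also have "\<dots> = (\<Sum>j<n. if j = i then \<pi> x (P i v) else 0)"
    proof (intro sum.cong refl)
      fix j assume j: "j \<in> {..<n}"
      have "\<pi> x (P j v) \<in> Us!j" using Ui img j by simp
      then show "P i (\<pi> x (P j v)) = (if j = i then \<pi> x (P i v) else 0)"
        using fix_i zero_j that j by auto
    qed
    also have "\<dots> = \<pi> x (P i v)" using that by simp
    finally show ?thesis .
  qed
  show ?thesis
    using P(1) img fix_i zero_j comm sum unfolding n_def by blast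
qed

lemma mult_even:
  fixes \<pi> :: "'h \<Rightarrow> 'v::euclidean_space \<Rightarrow> 'v" and J :: "'v \<Rightarrow> 'v"
  assumes pl: "\<And>x. linear (\<pi> x)"
    and J: "linear J" "\<forall>v. J (J v) = - v" "\<forall>v w. inner (J v) (J w) = inner v w"
      "\<forall>x v. J (\<pi> x v) = \<pi> x (J v)"
    and W: "irreducible_subrep \<pi> W" "real_type \<pi> W" and D: "dec \<pi> UNIV Us"
  shows "even (multiplicity_in \<pi> Us W)"
proof -
  define n where "n = length Us"
  define I where "I = {i. i < n \<and> rep_isomorphic \<pi> (Us!i) W}"
  have irrU: "irreducible_subrep \<pi> (Us!i)" if "i < n" for i using D that by (simp add: dec_def n_def)
  have invU: "invariant_subspace \<pi> (Us!i)" if "i < n" for i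
    using irrU[OF that] by (simp add: irreducible_subrep_def)
  have invW: "invariant_subspace \<pi> W" using W(1) by (simp add: irreducible_subrep_def)
  note Ws = irr_D(1)[OF W(1)]
  obtain P where P: "\<forall>i<n. linear (P i) \<and> (\<forall>v. P i v \<in> Us!i) \<and> (\<forall>u\<in>Us!i. P i u = u) \<and>
     (\<forall>j<n. j \<noteq> i \<longrightarrow> (\<forall>u\<in>Us!j. P i u = 0)) \<and> (\<forall>x v. P i (\<pi> x v) = \<pi> x (P i v))"
    "\<forall>v. (\<Sum>i<n. P i v) = v"
    using dec_proj[OF pl D] unfolding n_def by blast
  have Pl: "linear (P i)" and Pimg: "P i v \<in> Us!i" and Pfix: "u \<in> Us!i \<Longrightarrow> P i u = u"
    and Pc: "P i (\<pi> x v) = \<pi> x (P i v)" if "i < n" for i v u x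
    using P(1) that by blast+
  have P0: "P i u = 0" if "i < n" "j < n" "j \<noteq> i" "u \<in> Us!j" for i j u
    using P(1) that by blast
  define Q where "Q i f \<phi> \<longleftrightarrow> intertwiner \<pi> (Us!i) W f \<and> intertwiner \<pi> W (Us!i) \<phi> \<and>
      bij_betw \<phi> W (Us!i) \<and> (\<forall>u\<in>Us!i. \<phi> (f u) = u) \<and> (\<forall>w\<in>W. f (\<phi> w) = w)" for i f \<phi>
  have "\<forall>i. \<exists>p. i \<in> I \<longrightarrow> Q i (fst p) (snd p)"
  proof
    fix i
    show "\<exists>p. i \<in> I \<longrightarrow> Q i (fst p) (snd p)"
    proof (cases "i \<in> I")
      case True
      then obtain f where f: "intertwiner \<pi> (Us!i) W f" "bij_betw f (Us!i) W" and i: "i < n"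
        unfolding I_def rep_isomorphic_def by blast
      obtain \<phi> where "intertwiner \<pi> W (Us!i) \<phi>" "bij_betw \<phi> W (Us!i)" "\<forall>u\<in>Us!i. \<phi> (f u) = u" "\<forall>w\<in>W. f (\<phi> w) = w"
        using iso_inverse[OF invU[OF i] f] by blast
      then have "Q i f \<phi>" using f by (simp add: Q_def)
      then show ?thesis by (intro exI[of _ "(f, \<phi>)"]) simp
    qed simp
  qed
  from choice[OF this] obtain FP where FP: "\<forall>i. i \<in> I \<longrightarrow> Q i (fst (FP i)) (snd (FP i))" by blast
  define f where "f i = fst (FP i)" for i
  define \<phi> where "\<phi> i = snd (FP i)" for i
  have Qi: "Q i (f i) (\<phi> i)" if "i \<in> I" for i using FP that by (simp add: f_def \<phi>_def)
  have In: "i < n" if "i \<in> I" for i using that by (simp add: I_def)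
  obtain w0 where w0: "w0 \<in> W" "w0 \<noteq> 0" using irr_D(2)[OF W(1)] Ws subspace_0 by blast
  define v where "v i = \<phi> i w0" for i
  have vU: "v i \<in> Us!i" if "i \<in> I" for i
    using Qi[OF that] w0 by (auto simp: v_def Q_def intertwiner_def)
  have vnz: "v i \<noteq> 0" if "i \<in> I" for i
  proof
    assume "v i = 0"
    have l: "linear (\<phi> i)" using Qi[OF that] by (simp add: Q_def intertwiner_def)
    have "\<phi> i w0 = \<phi> i 0" using \<open>v i = 0\<close> linear_0[OF l] by (simp add: v_def)
    then have "w0 = 0" using Qi[OF that] w0(1) subspace_0[OF Ws]
      by (auto simp: Q_def bij_betw_def inj_on_def)
    then show False using w0 by simp
  qed
  define E where "E = span (v ` I)"
  have gE: "g w0 \<in> E" if g: "linear g" "\<forall>x. \<forall>w\<in>W. g (\<pi> x w) = \<pi> x (g w)" for g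
  proof -
    have "g w0 = (\<Sum>j<n. P j (g w0))" using P(2) by simp
    also have "\<dots> \<in> E" unfolding E_def
    proof (rule span_sum)
      fix j assume "j \<in> {..<n}"
      then have j: "j < n" by simp
      define h where "h = P j \<circ> g"
      have hi: "intertwiner \<pi> W (Us!j) h"
        unfolding intertwiner_def h_def
        using Pimg[OF j] Pc[OF j] g linear_compose[OF g(1) Pl[OF j]] by auto
      have hw0: "h w0 \<in> Us!j" using Pimg[OF j] by (simp add: h_def)
      show "P j (g w0) \<in> span (v ` I)"
      proof (cases "j \<in> I")
        case True
        have fi: "intertwiner \<pi> (Us!j) W (f j)" using Qi[OF True] by (simp add: Q_def)
        have "intertwiner \<pi> W W (f j \<circ> h)"
          using fi hi unfolding intertwiner_def by (auto simp: linear_compose image_subset_iff)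
        then obtain c where c: "\<forall>w\<in>W. (f j \<circ> h) w = c *\<^sub>R w" using W(2) unfolding real_type_def by blast
        have "h w0 = \<phi> j (f j (h w0))" using Qi[OF True] hw0 by (simp add: Q_def)
        also have "\<dots> = \<phi> j (c *\<^sub>R w0)" using c w0 by simp
        also have "\<dots> = c *\<^sub>R v j" using Qi[OF True] by (simp add: Q_def intertwiner_def linear_scale v_def)
        finally have "P j (g w0) = c *\<^sub>R v j" by (simp add: h_def)
        moreover have "v j \<in> span (v ` I)" using True by (simp add: span_base)
        ultimately show ?thesis by (simp add: span_mul)
      next
        case False
        have "\<not> bij_betw h W (Us!j)"
        proof
          assume "bij_betw h W (Us!j)"
          then have "rep_isomorphic \<pi> W (Us!j)" using hi by (auto simp: rep_isomorphic_def)
          then have "rep_isomorphic \<pi> (Us!j) W" using iso_sym[OF invW] by blast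
          then show False using False j by (simp add: I_def)
        qed
        then have "\<forall>w\<in>W. h w = 0" using schur[OF W(1) irrU[OF j] pl hi] by blast
        then have "P j (g w0) = 0" using w0 by (simp add: h_def)
        then show ?thesis by (simp add: span_zero)
      qed
    qed
    finally show ?thesis .
  qed
  have Es: "subspace E" by (simp add: E_def)
  have JE: "\<forall>y\<in>E. J y \<in> E"
  proof
    fix y assume "y \<in> E"
    then have "y \<in> span (v ` I)" by (simp add: E_def)
    moreover have "subspace (J -` E)" using linear_subspace_vimage[OF J(1) Es] .
    ultimately have "y \<in> J -` E"
    proof (rule span_induct[where P="\<lambda>y. y \<in> J -` E", unfolded Collect_mem_eq])
      fix b assume "b \<in> v ` I"
      then obtain i where i: "i \<in> I" "b = v i" by blast
      have l: "linear (\<phi> i)" and c: "\<forall>x. \<forall>w\<in>W. \<phi> i (\<pi> x w) = \<pi> x (\<phi> i w)"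
        using Qi[OF i(1)] by (auto simp: Q_def intertwiner_def)
      have "(J \<circ> \<phi> i) w0 \<in> E"
        by (rule gE) (use linear_compose[OF l J(1)] c J(4) in \<open>auto simp: comp_def\<close>)
      then show "b \<in> J -` E" using i by (simp add: v_def)
    qed
    then show "J y \<in> E" by simp
  qed
  have evE: "even (dim E)" using even_dim[OF J(1) Es JE] J(2,3) by blast
  have injv: "inj_on v I"
  proof (rule inj_onI)
    fix i j assume ij: "i \<in> I" "j \<in> I" "v i = v j"
    show "i = j"
    proof (rule ccontr)
      assume "i \<noteq> j"
      have "P i (v j) = 0" using P0[OF In[OF ij(1)] In[OF ij(2)]] \<open>i \<noteq> j\<close> vU[OF ij(2)] by simp
      moreover have "P i (v i) = v i" using Pfix[OF In[OF ij(1)] vU[OF ij(1)]] .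
      ultimately show False using ij(3) vnz[OF ij(1)] by simp
    qed
  qed
  have finI: "finite I" by (simp add: I_def)
  have indep: "independent (v ` I)"
  proof (rule independent_if_scalars_zero)
    show "finite (v ` I)" using finI by simp
    fix c :: "'v \<Rightarrow> real" and y assume s: "(\<Sum>y\<in>v ` I. c y *\<^sub>R y) = 0" and y: "y \<in> v ` I"
    then obtain k where k: "k \<in> I" "y = v k" by blast
    have "(\<Sum>i\<in>I. c (v i) *\<^sub>R v i) = 0" using s sum.reindex[OF injv, of "\<lambda>y. c y *\<^sub>R y"] by simp
    then have "P k (\<Sum>i\<in>I. c (v i) *\<^sub>R v i) = 0" using linear_0[OF Pl[OF In[OF k(1)]]] by simp
    then have "(\<Sum>i\<in>I. c (v i) *\<^sub>R P k (v i)) = 0"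
      by (simp add: linear_sum[OF Pl[OF In[OF k(1)]]] linear_scale[OF Pl[OF In[OF k(1)]]])
    moreover have "(\<Sum>i\<in>I. c (v i) *\<^sub>R P k (v i)) = (\<Sum>i\<in>I. if i = k then c (v k) *\<^sub>R v k else 0)"
    proof (rule sum.cong[OF refl])
      fix i assume i: "i \<in> I"
      show "c (v i) *\<^sub>R P k (v i) = (if i = k then c (v k) *\<^sub>R v k else 0)"
        using P0[OF In[OF k(1)] In[OF i]] Pfix[OF In[OF k(1)] vU[OF k(1)]] vU[OF i] by auto
    qed
    ultimately have "c (v k) *\<^sub>R v k = 0" using k(1) finI by simp
    then show "c y = 0" using vnz[OF k(1)] k(2) by simp
  qed
  have "dim E = card I" unfolding E_def using dim_span_eq_card_independent[OF indep] card_image[OF injv] by simp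
  moreover have "multiplicity_in \<pi> Us W = card I" by (simp add: multiplicity_in_def I_def n_def)
  ultimately show ?thesis using evE by simp
qed

lemma vbracket_inner:
  fixes \<pi> :: "'h::euclidean_space \<Rightarrow> 'v::real_inner \<Rightarrow> 'v"
  assumes lx: "\<And>v. linear (\<lambda>x. \<pi> x v)"
  shows "inner (vbracket \<pi> v w) x = inner (\<pi> x v) w"
proof -
  define z where "z = (\<Sum>b\<in>Basis. inner (\<pi> b v) w *\<^sub>R b)"
  have zP: "\<forall>x. inner z x = inner (\<pi> x v) w"
  proof
    fix x
    have "\<pi> x v = \<pi> (\<Sum>b\<in>Basis. inner x b *\<^sub>R b) v" by (simp add: euclidean_representation)
    also have "\<dots> = (\<Sum>b\<in>Basis. inner x b *\<^sub>R \<pi> b v)"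
      using linear_sum[OF lx[of v], of "\<lambda>b. inner x b *\<^sub>R b" Basis] linear_scale[OF lx[of v]] by simp
    finally have "inner (\<pi> x v) w = (\<Sum>b\<in>Basis. inner x b * inner (\<pi> b v) w)"
      by (simp add: inner_sum_left)
    moreover have "inner z x = (\<Sum>b\<in>Basis. inner (\<pi> b v) w * inner b x)"
      by (simp add: z_def inner_sum_left)
    ultimately show "inner z x = inner (\<pi> x v) w" by (simp add: inner_commute mult.commute)
  qed
  have uniq: "z' = z" if "\<forall>x. inner z' x = inner (\<pi> x v) w" for z'
  proof -
    have "inner (z' - z) (z' - z) = 0" using that zP by (simp add: inner_diff_left)
    then show ?thesis by simp
  qed
  have "vbracket \<pi> v w = z" unfolding vbracket_def
    by (rule the1_equality) (use zP uniq in blast)+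
  then show ?thesis using zP by simp
qed

lemma vbracket_eqI:
  fixes \<pi> :: "'h::euclidean_space \<Rightarrow> 'v::real_inner \<Rightarrow> 'v"
  assumes lx: "\<And>v. linear (\<lambda>x. \<pi> x v)" and "\<And>x. inner (\<pi> x a) b = inner (\<pi> x c) d"
  shows "vbracket \<pi> a b = vbracket \<pi> c d"
proof -
  have "inner (vbracket \<pi> a b - vbracket \<pi> c d) y = 0" for y
    using assms by (simp add: inner_diff_left vbracket_inner[OF lx])
  then have "inner (vbracket \<pi> a b - vbracket \<pi> c d) (vbracket \<pi> a b - vbracket \<pi> c d) = 0" by blast
  then show ?thesis by simp
qed

definition triv :: "unit \<Rightarrow> 'a::real_vector \<Rightarrow> 'a" where "triv x v = 0"

lemma plane_good:
  fixes e1 e2 :: "'a::euclidean_space"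
  assumes n: "norm e1 = 1" "norm e2 = 1" "inner e1 e2 = 0"
  shows "\<exists>J. good triv (span {e1, e2}) J"
proof -
  define A where "A = span {e1, e2}"
  have As: "subspace A" by (simp add: A_def)
  have eA: "e1 \<in> A" "e2 \<in> A" by (auto simp: A_def intro: span_base)
  have i11: "inner e1 e1 = 1" and i22: "inner e2 e2 = 1" and i21: "inner e2 e1 = 0"
    using n by (auto simp: dot_square_norm inner_commute)
  have exp: "v = inner v e1 *\<^sub>R e1 + inner v e2 *\<^sub>R e2" if "v \<in> A" for v
  proof -
    define d where "d = v - (inner v e1 *\<^sub>R e1 + inner v e2 *\<^sub>R e2)"
    have "d \<in> A" using that eA As by (simp add: d_def subspace_diff subspace_add subspace_mul)
    moreover have "inner d e1 = 0" "inner d e2 = 0"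
      by (simp_all add: d_def inner_diff_left inner_add_left i11 i22 n(3) i21)
    then have "d \<in> orth A" unfolding A_def by (rule orth_pair)
    ultimately have "d = 0" using orth_self by blast
    then show ?thesis by (simp add: d_def)
  qed
  define K where "K v = inner v e1 *\<^sub>R e2 - inner v e2 *\<^sub>R e1" for v
  have Kl: "linear K" unfolding K_def
    by (rule linearI) (simp_all add: inner_add_left algebra_simps)
  have K1: "inner (K v) e1 = - inner v e2" and K2: "inner (K v) e2 = inner v e1" for v
    by (simp_all add: K_def inner_diff_left i11 i22 n(3) i21)
  show ?thesis unfolding A_def[symmetric]
  proof (rule good_extend[OF As Kl])
    show "\<forall>v\<in>A. K v \<in> A" using eA As by (simp add: K_def subspace_diff subspace_mul)
    show "\<forall>v\<in>A. K (K v) = - v"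
    proof
      fix v assume "v \<in> A"
      have "K (K v) = inner (K v) e1 *\<^sub>R e2 - inner (K v) e2 *\<^sub>R e1" by (rule K_def)
      also have "\<dots> = - (inner v e2 *\<^sub>R e2) - inner v e1 *\<^sub>R e1" by (simp add: K1 K2)
      also have "\<dots> = - v" using exp[OF \<open>v \<in> A\<close>] by (simp add: algebra_simps)
      finally show "K (K v) = - v" .
    qed
    show "\<forall>v\<in>A. \<forall>w\<in>A. inner (K v) (K w) = inner v w"
    proof (intro ballI)
      fix v w assume vw: "v \<in> A" "w \<in> A"
      have "inner (K v) (K w) = inner v e1 * inner w e1 + inner v e2 * inner w e2"
        by (simp add: K_def inner_diff_left inner_diff_right i11 i22 n(3) i21)
      also have "\<dots> = inner v w"
        by (subst (3) exp[OF vw(2)]) (simp add: inner_add_right)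
      finally show "inner (K v) (K w) = inner v w" .
    qed
    show "\<forall>x. \<forall>v\<in>A. K (triv x v) = triv x (K v)" by (simp add: triv_def linear_0[OF Kl])
    show "\<forall>x. \<forall>v\<in>A. triv x v \<in> A" by (simp add: triv_def subspace_0[OF As])
  qed
qed

lemma center_J:
  fixes C :: "'a::euclidean_space set"
  shows "subspace C \<Longrightarrow> even (dim C) \<Longrightarrow> \<exists>J. good triv C J"
proof (induction "dim C" arbitrary: C rule: less_induct)
  case less
  have tl: "linear (triv x :: 'a \<Rightarrow> 'a)" for x :: unit
  proof -
    have "triv x = (\<lambda>v::'a. 0)" by (rule ext) (simp add: triv_def)
    then show ?thesis by (simp add: linear_zero)
  qed
  show ?case
  proof (cases "C = {0}")
    case True then show ?thesis using good_zero[of triv, OF tl] by blast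
  next
    case False
    then obtain u where u: "u \<in> C" "u \<noteq> 0" using less.prems(1) subspace_0 by blast
    define e1 where "e1 = u /\<^sub>R norm u"
    have e1: "e1 \<in> C" "norm e1 = 1" using u less.prems(1) by (auto simp: e1_def subspace_mul)
    have s1: "subspace (span {e1})" by simp
    have s1C: "span {e1} \<subseteq> C" using e1 less.prems(1) by (simp add: span_minimal)
    have "e1 \<noteq> 0" using e1(2) by auto
    then have "dim (span {e1}) = 1" by (simp add: dim_span)
    define C1 where "C1 = C \<inter> orth (span {e1})"
    have "dim (span {e1}) + dim C1 = dim C" unfolding C1_def by (rule orth_dim[OF s1 less.prems(1) s1C])
    then have dC1: "dim C1 = dim C - 1" using \<open>dim (span {e1}) = 1\<close> by simp
    have "dim C \<noteq> 0"
    proof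
      assume "dim C = 0"
      then have "C \<subseteq> {0}" by simp
      then show False using False subspace_0[OF less.prems(1)] by blast
    qed
    then have "dim C \<ge> 2" using less.prems(2) by presburger
    then have "dim C1 \<noteq> 0" using dC1 by simp
    moreover have C1s: "subspace C1" unfolding C1_def using less.prems(1) subspace_orth by (rule subspace_inter)
    ultimately have "C1 \<noteq> {0}" by auto
    then obtain u2 where u2: "u2 \<in> C1" "u2 \<noteq> 0" using C1s subspace_0 by blast
    define e2 where "e2 = u2 /\<^sub>R norm u2"
    have e2: "e2 \<in> C1" "norm e2 = 1" using u2 C1s by (auto simp: e2_def subspace_mul)
    have "e1 \<in> span {e1}" by (simp add: span_base)
    then have o12: "inner e1 e2 = 0" using e2(1) by (auto simp: C1_def orth_def inner_commute)
    define A where "A = span {e1, e2}"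
    obtain JA where JA: "good triv A JA" using plane_good[OF e1(2) e2(2) o12] unfolding A_def by blast
    have As: "subspace A" by (simp add: A_def)
    have AC: "A \<subseteq> C" unfolding A_def using e1(1) e2(1) less.prems(1) by (simp add: span_minimal C1_def)
    have "e1 \<noteq> e2" using o12 e1(2) by auto
    have indep: "independent {e1, e2}"
      by (rule pairwise_orthogonal_independent) (use e1(2) e2(2) o12 in \<open>auto simp: pairwise_def orthogonal_def inner_commute\<close>)
    have dA: "dim A = 2" unfolding A_def using dim_span_eq_card_independent[OF indep] \<open>e1 \<noteq> e2\<close> by simp
    define C' where "C' = C \<inter> orth A"
    have C's: "subspace C'" unfolding C'_def using less.prems(1) subspace_orth by (rule subspace_inter)
    have "dim A + dim C' = dim C" unfolding C'_def by (rule orth_dim[OF As less.prems(1) AC])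
    then have dC': "dim C' + 2 = dim C" using dA by simp
    then have "dim C' < dim C" by simp
    have "even (dim C' + 2)" using dC' less.prems(2) by simp
    then have "even (dim C')" by simp
    note \<open>dim C' < dim C\<close> this
    then obtain J' where J': "good triv C' J'" using less.hyps C's by blast
    have AC': "\<forall>a\<in>A. \<forall>b\<in>C'. inner a b = 0" using orth_comm by (auto simp: C'_def)
    have "good triv {a + b | a b. a \<in> A \<and> b \<in> C'} (\<lambda>v. JA v + J' v)"
      by (rule good_sum[OF tl As _ C's _ AC' JA J']) (simp_all add: triv_def subspace_0[OF As] subspace_0[OF C's])
    moreover have "{a + b | a b. a \<in> A \<and> b \<in> C'} = C" unfolding C'_def by (rule sum_orth[OF As less.prems(1) AC])
    ultimately have "good triv C (\<lambda>v. JA v + J' v)" by simp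
    then show ?thesis by blast
  qed
qed

lemma vbracket_zero:
  fixes \<pi> :: "'h::euclidean_space \<Rightarrow> 'v::real_inner \<Rightarrow> 'v"
  assumes lx: "\<And>v. linear (\<lambda>x. \<pi> x v)" and pl: "\<And>x. linear (\<pi> x)"
  shows "vbracket \<pi> 0 w = 0"
proof -
  have "inner (vbracket \<pi> 0 w) x = 0" for x using vbracket_inner[OF lx] linear_0[OF pl] by simp
  then have "inner (vbracket \<pi> 0 w) (vbracket \<pi> 0 w) = 0" by blast
  then show ?thesis by simp
qed

lemma vbracket_neg:
  fixes \<pi> :: "'h::euclidean_space \<Rightarrow> 'v::real_inner \<Rightarrow> 'v"
  assumes lx: "\<And>v. linear (\<lambda>x. \<pi> x v)" and pl: "\<And>x. linear (\<pi> x)"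
  shows "vbracket \<pi> (- a) b = - vbracket \<pi> a b"
proof -
  have "inner (vbracket \<pi> (- a) b + vbracket \<pi> a b) x = 0" for x
    using vbracket_inner[OF lx] linear_neg[OF pl] by (simp add: inner_add_left)
  then have "inner (vbracket \<pi> (- a) b + vbracket \<pi> a b) (vbracket \<pi> (- a) b + vbracket \<pi> a b) = 0" by blast
  then have "vbracket \<pi> (- a) b + vbracket \<pi> a b = 0" by simp
  then show ?thesis by (simp add: eq_neg_iff_add_eq_0)
qed

lemma forward:
  fixes br :: "'h::euclidean_space \<Rightarrow> 'h \<Rightarrow> 'h"
    and \<pi> :: "'h \<Rightarrow> 'v::euclidean_space \<Rightarrow> 'v"
  assumes pl: "\<And>x. linear (\<pi> x)" and lx: "\<And>v. linear (\<lambda>x. \<pi> x v)" and nt: "no_trivial_part \<pi>"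
    and cs: "complex_structure_on (ncarrier s) (nbracket \<pi>) J"
    and ab: "abelian_cs (ncarrier s) (nbracket \<pi>) J" and oc: "orthogonal_cs (ncarrier s) J"
  shows "\<exists>JV. linear JV \<and> (\<forall>v. JV (JV v) = - v) \<and> (\<forall>v w. inner (JV v) (JV w) = inner v w) \<and>
      (\<forall>x v. JV (\<pi> x v) = \<pi> x (JV v))"
proof -
  define N where "N = (ncarrier s :: (real \<times> 'h \<times> 'v) set)"
  define V where "V p = snd (snd p)" for p :: "real \<times> 'h \<times> 'v"
  define \<iota> where "\<iota> v = ((0::real), (0::'h), v)" for v :: 'v
  have memN: "p \<in> N \<longleftrightarrow> (s = 0 \<longrightarrow> fst p = 0)" for p by (simp add: N_def ncarrier_def)
  have Jl: "linear J" and JN: "\<forall>u\<in>N. J u \<in> N" and JJ: "\<forall>u\<in>N. J (J u) = - u"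
    using cs by (auto simp: complex_structure_on_def N_def)
  have abl: "\<forall>u\<in>N. \<forall>w\<in>N. nbracket \<pi> (J u) (J w) = nbracket \<pi> u w" using ab by (simp add: abelian_cs_def N_def)
  have orl: "\<forall>u\<in>N. \<forall>w\<in>N. inner (J u) (J w) = inner u w" using oc by (simp add: orthogonal_cs_def N_def)
  have nb: "nbracket \<pi> p q = (0, vbracket \<pi> (V p) (V q), 0)" for p q by (simp add: nbracket_def V_def)
  have \<iota>N: "\<iota> v \<in> N" for v by (simp add: memN \<iota>_def)
  have central: "V (J c) = 0" if c: "c \<in> N" "V c = 0" for c
  proof -
    have Jc: "J c \<in> N" using JN c by blast
    have vb: "vbracket \<pi> (V (J c)) y = 0" for y
    proof -
      have "nbracket \<pi> (J (J c)) (J (\<iota> y)) = nbracket \<pi> (J c) (\<iota> y)" using abl Jc \<iota>N[of y] by simp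
      moreover have "V (J (J c)) = 0" using JJ c by (simp add: V_def)
      ultimately show ?thesis using vbracket_zero[OF lx pl] by (simp add: nb \<iota>_def V_def)
    qed
    have "\<pi> x (V (J c)) = 0" for x
    proof -
      have "inner (\<pi> x (V (J c))) (\<pi> x (V (J c))) = inner (vbracket \<pi> (V (J c)) (\<pi> x (V (J c)))) x"
        using vbracket_inner[OF lx] by simp
      then show ?thesis using vb by simp
    qed
    then show ?thesis using nt by (simp add: no_trivial_part_def)
  qed
  have Jiota: "J (\<iota> v) = \<iota> (V (J (\<iota> v)))" for v
  proof -
    define p where "p = J (\<iota> v)"
    have pN: "p \<in> N" using JN \<iota>N by (simp add: p_def)
    define c where "c = (fst p, fst (snd p), (0::'v))"
    have cN: "c \<in> N" using pN by (simp add: memN c_def)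
    have Vc: "V c = 0" by (simp add: c_def V_def)
    have "inner p c = inner (J p) (J c)" using orl pN cN by simp
    also have "J p = - \<iota> v" using JJ \<iota>N by (simp add: p_def)
    also have "inner (- \<iota> v) (J c) = - inner v (V (J c))"
      by (simp add: \<iota>_def V_def inner_prod_def)
    also have "V (J c) = 0" using central[OF cN Vc] .
    finally have "inner p c = 0" by simp
    then have "fst p * fst p + inner (fst (snd p)) (fst (snd p)) = 0"
      by (simp add: c_def inner_prod_def)
    moreover have "fst p * fst p \<ge> 0" "inner (fst (snd p)) (fst (snd p)) \<ge> 0" by simp_all
    ultimately have "fst p * fst p = 0" "inner (fst (snd p)) (fst (snd p)) = 0" by linarith+
    then have "fst p = 0" "fst (snd p) = 0" by simp_all
    then have "p = \<iota> (V p)" by (simp add: \<iota>_def V_def prod_eq_iff)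
    then show ?thesis unfolding p_def .
  qed
  define JV where "JV v = V (J (\<iota> v))" for v
  have Ji: "J (\<iota> v) = \<iota> (JV v)" for v using Jiota by (simp add: JV_def)
  have \<iota>add: "\<iota> (a + b) = \<iota> a + \<iota> b" and \<iota>scale: "\<iota> (r *\<^sub>R a) = r *\<^sub>R \<iota> a" for a b r
    by (simp_all add: \<iota>_def)
  have JVl: "linear JV" unfolding JV_def
    by (rule linearI) (simp_all add: \<iota>add \<iota>scale linear_add[OF Jl] linear_scale[OF Jl] V_def)
  have JV2: "JV (JV v) = - v" for v
  proof -
    have "\<iota> (JV (JV v)) = J (J (\<iota> v))" using Ji by simp
    also have "\<dots> = - \<iota> v" using JJ \<iota>N by simp
    finally show ?thesis by (simp add: \<iota>_def)
  qed
  have JVi: "inner (JV v) (JV w) = inner v w" for v w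
  proof -
    have "inner (J (\<iota> v)) (J (\<iota> w)) = inner (\<iota> v) (\<iota> w)" using orl \<iota>N[of v] \<iota>N[of w] by simp
    then show ?thesis using Ji by (simp add: \<iota>_def)
  qed
  have JVa: "inner (\<pi> x (JV v)) (JV w) = inner (\<pi> x v) w" for x v w
  proof -
    have "nbracket \<pi> (J (\<iota> v)) (J (\<iota> w)) = nbracket \<pi> (\<iota> v) (\<iota> w)" using abl \<iota>N[of v] \<iota>N[of w] by simp
    then have "vbracket \<pi> (JV v) (JV w) = vbracket \<pi> v w" using Ji by (simp add: nb \<iota>_def V_def)
    then have "inner (vbracket \<pi> (JV v) (JV w)) x = inner (vbracket \<pi> v w) x" by simp
    then show ?thesis by (simp add: vbracket_inner[OF lx])
  qed
  have JVc: "JV (\<pi> x v) = \<pi> x (JV v)" for x v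
  proof (rule inner_eq_on_subspace[OF subspace_UNIV])
    fix y :: 'v
    have y: "y = JV (- JV y)" using JV2 linear_neg[OF JVl] by simp
    have "inner (JV (\<pi> x v)) (JV (- JV y)) = inner (\<pi> x (JV v)) (JV (- JV y))"
      using JVi JVa by simp
    then show "inner (JV (\<pi> x v)) y = inner (\<pi> x (JV v)) y" using y by simp
  qed simp_all
  show ?thesis using JVl JV2 JVi JVc by blast
qed

lemma backward:
  fixes \<pi> :: "'h::euclidean_space \<Rightarrow> 'v::euclidean_space \<Rightarrow> 'v" and s :: nat
  assumes pl: "\<And>x. linear (\<pi> x)" and lx: "\<And>v. linear (\<lambda>x. \<pi> x v)"
    and JVl: "linear JV" and JV2: "\<forall>v. JV (JV v) = - v" and JVi: "\<forall>v w. inner (JV v) (JV w) = inner v w"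
    and JVc: "\<forall>x v. JV (\<pi> x v) = \<pi> x (JV v)"
    and s: "s \<le> 1" "DIM('h) mod 2 = s mod 2"
  shows "\<exists>J. complex_structure_on (ncarrier s) (nbracket \<pi>) J \<and>
              abelian_cs (ncarrier s) (nbracket \<pi>) J \<and> orthogonal_cs (ncarrier s) J"
proof -
  define N where "N = (ncarrier s :: (real \<times> 'h \<times> 'v) set)"
  define V where "V p = snd (snd p)" for p :: "real \<times> 'h \<times> 'v"
  define \<iota> where "\<iota> v = ((0::real), (0::'h), v)" for v :: 'v
  have memN: "p \<in> N \<longleftrightarrow> (s = 0 \<longrightarrow> fst p = 0)" for p by (simp add: N_def ncarrier_def)
  have nb: "nbracket \<pi> p q = (0, vbracket \<pi> (V p) (V q), 0)" for p q by (simp add: nbracket_def V_def)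
  define C where "C = {p :: real \<times> 'h \<times> 'v. V p = 0 \<and> (s = 0 \<longrightarrow> fst p = 0)}"
  have Cs: "subspace C" unfolding C_def subspace_def by (auto simp: V_def)
  have evC: "even (dim C)"
  proof (cases "s = 0")
    case True
    define f where "f z = ((0::real), z, (0::'v))" for z :: 'h
    have fl: "linear f" unfolding f_def by (rule linearI) simp_all
    have "C = f ` UNIV" using True by (auto simp: C_def f_def V_def image_def prod_eq_iff)
    moreover have "inj_on f (span UNIV)" by (auto simp: f_def inj_on_def)
    ultimately have "dim C = dim (UNIV :: 'h set)" using dim_image_eq[OF fl] by simp
    then show ?thesis using s True by (simp add: even_iff_mod_2_eq_zero)
  next
    case False
    then have s1: "s = 1" using s(1) by simp
    define f where "f q = (fst q, snd q, (0::'v))" for q :: "real \<times> 'h"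
    have fl: "linear f" unfolding f_def by (rule linearI) simp_all
    have "C = f ` UNIV" using s1
      by (auto simp: C_def f_def V_def image_def prod_eq_iff intro: exI[of _ "(a, b)" for a b])
    moreover have "inj_on f (span UNIV)" by (auto simp: f_def inj_on_def prod_eq_iff)
    ultimately have "dim C = dim (UNIV :: (real \<times> 'h) set)" using dim_image_eq[OF fl] by simp
    then have "dim C = 1 + DIM('h)" by simp
    then show ?thesis using s s1 by (simp add: even_iff_mod_2_eq_zero) presburger
  qed
  obtain JC where JC: "good triv C JC" using center_J[OF Cs evC] by blast
  have JCl: "linear JC" and JCC: "\<And>x. x \<in> C \<Longrightarrow> JC x \<in> C" and JC2: "\<And>x. x \<in> C \<Longrightarrow> JC (JC x) = - x"
    and JCi: "\<And>x y. x \<in> C \<Longrightarrow> y \<in> C \<Longrightarrow> inner (JC x) (JC y) = inner x y"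
    using JC unfolding good_def by blast+
  define cp where "cp p = (fst p, fst (snd p), (0::'v))" for p :: "real \<times> 'h \<times> 'v"
  define J where "J p = JC (cp p) + \<iota> (JV (V p))" for p
  have cpC: "cp p \<in> C" if "p \<in> N" for p using that by (simp add: C_def cp_def V_def memN)
  have cpfix: "cp x = x" if "x \<in> C" for x using that by (simp add: C_def cp_def V_def prod_eq_iff)
  have VC: "V x = 0" if "x \<in> C" for x using that by (simp add: C_def)
  have dec: "p = cp p + \<iota> (V p)" for p by (simp add: cp_def \<iota>_def V_def prod_eq_iff)
  have cp_add: "cp (x + \<iota> a) = cp x" for x a by (simp add: cp_def \<iota>_def)
  have V_add: "V (x + \<iota> a) = V x + a" for x a by (simp add: V_def \<iota>_def)
  have cpJ: "cp (J p) = JC (cp p)" if "p \<in> N" for p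
    unfolding J_def cp_add using cpfix[OF JCC[OF cpC[OF that]]] .
  have VJ: "V (J p) = JV (V p)" if "p \<in> N" for p
    unfolding J_def V_add using VC[OF JCC[OF cpC[OF that]]] by simp
  have inner_split: "inner (x + \<iota> a) (y + \<iota> b) = inner x y + inner a b" if "x \<in> C" "y \<in> C" for x y a b
    using VC[OF that(1)] VC[OF that(2)] by (simp add: \<iota>_def V_def inner_add_left inner_add_right inner_prod_def)
  have cpl: "linear cp" unfolding cp_def by (rule linearI) simp_all
  have \<iota>l: "linear \<iota>" unfolding \<iota>_def by (rule linearI) simp_all
  have Vl: "linear V" unfolding V_def by (rule linearI) simp_all
  have Jl: "linear J" unfolding J_def
    by (intro linear_compose_add linear_compose[OF cpl JCl, unfolded comp_def]
        linear_compose[OF linear_compose[OF Vl JVl] \<iota>l, unfolded comp_def])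
  have JN: "J p \<in> N" if "p \<in> N" for p
  proof -
    have "s = 0 \<longrightarrow> fst (JC (cp p)) = 0" using JCC[OF cpC[OF that]] by (simp add: C_def)
    then show ?thesis by (simp add: memN J_def \<iota>_def)
  qed
  have JJ: "J (J p) = - p" if "p \<in> N" for p
  proof -
    have "J (J p) = JC (cp (J p)) + \<iota> (JV (V (J p)))" by (simp add: J_def)
    also have "\<dots> = JC (JC (cp p)) + \<iota> (JV (JV (V p)))" using cpJ[OF that] VJ[OF that] by simp
    also have "\<dots> = - cp p + \<iota> (- V p)" using JC2[OF cpC[OF that]] JV2 by simp
    also have "\<dots> = - p" using dec[of p] linear_neg[OF \<iota>l] by (metis minus_add_distrib)
    finally show ?thesis .
  qed
  have Jin: "inner (J p) (J q) = inner p q" if "p \<in> N" "q \<in> N" for p q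
  proof -
    have "inner (J p) (J q) = inner (JC (cp p)) (JC (cp q)) + inner (JV (V p)) (JV (V q))"
      unfolding J_def by (rule inner_split[OF JCC[OF cpC[OF that(1)]] JCC[OF cpC[OF that(2)]]])
    also have "\<dots> = inner (cp p) (cp q) + inner (V p) (V q)" using JCi cpC that JVi by simp
    also have "\<dots> = inner (cp p + \<iota> (V p)) (cp q + \<iota> (V q))"
      using inner_split[OF cpC[OF that(1)] cpC[OF that(2)]] by simp
    also have "\<dots> = inner p q" using dec[of p] dec[of q] by simp
    finally show ?thesis .
  qed
  have vbJ: "vbracket \<pi> (JV a) (JV b) = vbracket \<pi> a b" for a b
    by (rule vbracket_eqI[OF lx]) (simp add: JVc[rule_format, symmetric] JVi)
  have vbA: "vbracket \<pi> (JV a) b + vbracket \<pi> a (JV b) = 0" for a b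
  proof -
    have "vbracket \<pi> (JV a) b = vbracket \<pi> (- a) (JV b)"
    proof (rule vbracket_eqI[OF lx])
      fix x
      have "inner (\<pi> x (- a)) (JV b) = - inner (JV (\<pi> x a)) (JV (JV b))"
        using linear_neg[OF pl] JVi by simp
      also have "\<dots> = inner (\<pi> x (JV a)) b" using JV2 JVc by simp
      finally show "inner (\<pi> x (JV a)) b = inner (\<pi> x (- a)) (JV b)" by simp
    qed
    then show ?thesis using vbracket_neg[OF lx pl] by simp
  qed
  have abel: "nbracket \<pi> (J u) (J w) = nbracket \<pi> u w" if "u \<in> N" "w \<in> N" for u w
    using VJ that vbJ by (simp add: nb)
  have "complex_structure_on N (nbracket \<pi>) J"
    unfolding complex_structure_on_def
  proof (intro conjI ballI)
    show "linear J" by fact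
    show "J ` N \<subseteq> N" using JN by blast
    fix u assume u: "u \<in> N"
    show "J (J u) = - u" using JJ[OF u] .
    fix w assume w: "w \<in> N"
    have "nbracket \<pi> (J u) w + nbracket \<pi> u (J w) = 0"
      using VJ[OF u] VJ[OF w] vbA by (simp add: nb zero_prod_def)
    then show "nbracket \<pi> u w + J (nbracket \<pi> (J u) w + nbracket \<pi> u (J w)) - nbracket \<pi> (J u) (J w) = 0"
      using abel[OF u w] linear_0[OF Jl] by simp
  qed
  moreover have "abelian_cs N (nbracket \<pi>) J" using abel by (simp add: abelian_cs_def)
  moreover have "orthogonal_cs N J" using Jin by (simp add: orthogonal_cs_def)
  ultimately show ?thesis unfolding N_def by blast
qed

theorem mainTheorem19:
  fixes br :: "'h::euclidean_space \<Rightarrow> 'h \<Rightarrow> 'h"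
    and \<pi> :: "'h \<Rightarrow> 'v::euclidean_space \<Rightarrow> 'v"
    and s :: nat
  assumes "lie_algebra br" and "ad_invariant br"
    and "representation br \<pi>" and "faithful \<pi>" and "no_trivial_part \<pi>"
    and "rep_invariant_inner \<pi>"
    and "s \<le> 1" and "DIM('h) mod 2 = s mod 2"
  shows "(\<exists>J. complex_structure_on (ncarrier s) (nbracket \<pi>) J \<and>
              abelian_cs (ncarrier s) (nbracket \<pi>) J \<and>
              orthogonal_cs (ncarrier s) J)
     \<longleftrightarrow> (\<forall>W Us. irreducible_subrep \<pi> W \<and> real_type \<pi> W \<and> irreducible_decomposition \<pi> Us
              \<longrightarrow> even (multiplicity_in \<pi> Us W))"
proof -
  have pl: "\<And>x. linear (\<pi> x)" and lx: "\<And>v. linear (\<lambda>x. \<pi> x v)"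
    using assms(3) by (auto simp: representation_def)
  show ?thesis
  proof
    assume "\<exists>J. complex_structure_on (ncarrier s) (nbracket \<pi>) J \<and>
              abelian_cs (ncarrier s) (nbracket \<pi>) J \<and> orthogonal_cs (ncarrier s) J"
    then obtain J where J: "complex_structure_on (ncarrier s) (nbracket \<pi>) J"
      "abelian_cs (ncarrier s) (nbracket \<pi>) J" "orthogonal_cs (ncarrier s) J" by blast
    obtain JV where JV: "linear JV" "\<forall>v. JV (JV v) = - v" "\<forall>v w. inner (JV v) (JV w) = inner v w"
      "\<forall>x v. JV (\<pi> x v) = \<pi> x (JV v)"
      using forward[OF pl lx assms(5) J] by blast
    show "\<forall>W Us. irreducible_subrep \<pi> W \<and> real_type \<pi> W \<and> irreducible_decomposition \<pi> Us
              \<longrightarrow> even (multiplicity_in \<pi> Us W)"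
    proof (intro allI impI)
      fix W Us assume a: "irreducible_subrep \<pi> W \<and> real_type \<pi> W \<and> irreducible_decomposition \<pi> Us"
      then have "dec \<pi> UNIV Us" by (simp add: dec_UNIV)
      then show "even (multiplicity_in \<pi> Us W)" using mult_even[OF pl JV] a by blast
    qed
  next
    assume hyp: "\<forall>W Us. irreducible_subrep \<pi> W \<and> real_type \<pi> W \<and> irreducible_decomposition \<pi> Us
              \<longrightarrow> even (multiplicity_in \<pi> Us W)"
    have hyp': "\<forall>W Ds. irreducible_subrep \<pi> W \<and> real_type \<pi> W \<and> dec \<pi> UNIV Ds \<longrightarrow> even (multiplicity_in \<pi> Ds W)"
      using hyp by (simp add: dec_UNIV)
    have "invariant_subspace \<pi> UNIV" by (simp add: invariant_subspace_def)
    then obtain JV where JV: "good \<pi> UNIV JV" using construct[OF assms(6) pl] hyp' by blast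
    have JVl: "linear JV" and JV2: "\<forall>v. JV (JV v) = - v" and JVi: "\<forall>v w. inner (JV v) (JV w) = inner v w"
      and JVc: "\<forall>x v. JV (\<pi> x v) = \<pi> x (JV v)"
      using JV unfolding good_def by blast+
    show "\<exists>J. complex_structure_on (ncarrier s) (nbracket \<pi>) J \<and>
              abelian_cs (ncarrier s) (nbracket \<pi>) J \<and> orthogonal_cs (ncarrier s) J"
      by (rule backward[OF pl lx JVl JV2 JVi JVc assms(7,8)])
  qed
qed


end
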